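(* Let $S=\{(X_1,y_1),(X_2,y_2)\}\in\mathcal{S}_2$ be fitted in the cyclic ordering, and let $k=2n$ with $n\ge1$. Then $$F_{\tau,S}(k)\le\frac12\max_i\Big\{(\cos^2\theta_i)^{k-1}(1-\cos^2\theta_i)\Big\},$$ where the maximum ranges over the non-zero principal angles $\theta_i\in(0,\pi/2]$ between $\mathrm{range}(X_1^\top)$ and $\mathrm{range}(X_2^\top)$ (a maximum over the empty set is $0$). Moreover, if all non-zero singular values of $X_1$ equal $1$, then $F_{\tau,S}(k)=\frac12\|(I-P_1)(P_2P_1)^n w^\star\|^2$, and the supremum of $F_{\tau,S}(k)$ over all labels $y_1,y_2$ with $S\in\mathcal{S}_2$ equals the right-hand side above.
   Context: Let $d\ge 1$, $T\ge1$. A task is a pair $(X_m,y_m)$ with $X_m\in\mathbb{R}^{n_m\times d}$, $y_m\in\mathbb{R}^{n_m}$ and $\operatorname{rank}(X_m)<d$. $\mathcal{S}_T$ denotes the set of collections $S=\{(X_m,y_m)\}_{m=1}^T$ of $T$ tasks such that $\|X_m\|\le 1$ (spectral norm) for all $m$ and there exists $w\in\mathbb{R}^d$ with $\|w\|\le 1$ and $y_m=X_mw$ for all $m$. Given $S$ and an ordering $\tau:\mathbb{N}^+\to\{1,\dots,T\}$, the iterates are $w_0=0$ and $w_t=w_{t-1}+X_{\tau(t)}^+(y_{\tau(t)}-X_{\tau(t)}w_{t-1})$, with $A^+$ the Moore–Penrose pseudoinverse. The forgetting at iteration $k$ is $F_{\tau,S}(k)=\frac1k\sum_{t=1}^k\|X_{\tau(t)}w_k-y_{\tau(t)}\|^2$.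 The cyclic ordering is $\tau(t)=((t-1)\bmod T)+1$. $w^\star$ denotes the minimum Euclidean-norm vector with $X_mw^\star=y_m$ for all $m$. $P_m=I-X_m^+X_m$ is the orthogonal projection onto $\ker X_m$. Principal angles: for data matrices $X_1,X_2$ let $r=\min(\operatorname{rank}X_1,\operatorname{rank}X_2)$. The principal angles $0\le\theta_1\le\dots\le\theta_r\le\pi/2$ between $\mathrm{range}(X_1^\top)$ and $\mathrm{range}(X_2^\top)$ are defined recursively by $\cos\theta_i=|u_i^\top v_i|$, where $(u_i,v_i)$ maximizes $|u^\top v|$ over unit vectors $u\in\mathrm{range}(X_1^\top)$, $v\in\mathrm{range}(X_2^\top)$ with $u\perp u_j$, $v\perp v_j$ for all $j<i$. *)

theory Defs
  imports "HOL-Analysis.Analysis"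
begin

definition pinv :: "real^'d^'n \<Rightarrow> real^'n^'d" where
  "pinv A = (THE B. A ** B ** A = A \<and> B ** A ** B = B \<and>
                    transpose (A ** B) = A ** B \<and> transpose (B ** A) = B ** A)"

definition spec_norm :: "real^'d^'n \<Rightarrow> real" where
  "spec_norm A = onorm (\<lambda>x. A *v x)"

definition is_task :: "real^'d^'n \<Rightarrow> real^'n \<Rightarrow> bool" where
  "is_task X y \<longleftrightarrow> rank X < CARD('d)"

definition in_S2 :: "real^'d^'n1 \<Rightarrow> real^'n1 \<Rightarrow> real^'d^'n2 \<Rightarrow> real^'n2 \<Rightarrow> bool" where
  "in_S2 X1 y1 X2 y2 \<longleftrightarrow> is_task X1 y1 \<and> is_task X2 y2 \<and>
     spec_norm X1 \<le> 1 \<and> spec_norm X2 \<le> 1 \<and>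
     (\<exists>w. norm w \<le> 1 \<and> y1 = X1 *v w \<and> y2 = X2 *v w)"

definition tau2 :: "nat \<Rightarrow> nat" where
  "tau2 t = ((t - 1) mod 2) + 1"

fun cyc_iter :: "real^'d^'n1 \<Rightarrow> real^'n1 \<Rightarrow> real^'d^'n2 \<Rightarrow> real^'n2 \<Rightarrow> nat \<Rightarrow> real^'d" where
  "cyc_iter X1 y1 X2 y2 0 = 0"
| "cyc_iter X1 y1 X2 y2 (Suc t) =
     (let w = cyc_iter X1 y1 X2 y2 t in
       if tau2 (Suc t) = 1 then w + pinv X1 *v (y1 - X1 *v w)
       else w + pinv X2 *v (y2 - X2 *v w))"

definition forgetting :: "real^'d^'n1 \<Rightarrow> real^'n1 \<Rightarrow> real^'d^'n2 \<Rightarrow> real^'n2 \<Rightarrow> nat \<Rightarrow> real" where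
  "forgetting X1 y1 X2 y2 k =
     (let wk = cyc_iter X1 y1 X2 y2 k in
      (1 / real k) * (\<Sum>t\<in>{1..k}.
         (if tau2 t = 1 then (norm (X1 *v wk - y1))\<^sup>2 else (norm (X2 *v wk - y2))\<^sup>2)))"

definition min_norm_sol :: "real^'d^'n1 \<Rightarrow> real^'n1 \<Rightarrow> real^'d^'n2 \<Rightarrow> real^'n2 \<Rightarrow> real^'d" where
  "min_norm_sol X1 y1 X2 y2 = (THE w. (X1 *v w = y1 \<and> X2 *v w = y2) \<and>
      (\<forall>v. X1 *v v = y1 \<and> X2 *v v = y2 \<longrightarrow> norm w \<le> norm v))"

definition kerproj :: "real^'d^'n \<Rightarrow> real^'d^'d" where
  "kerproj X = mat 1 - pinv X ** X"

definition rowspace :: "real^'d^'n \<Rightarrow> (real^'d) set" where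
  "rowspace X = range (\<lambda>z. transpose X *v z)"

definition principal_seq :: "'a::euclidean_space set \<Rightarrow> 'a set \<Rightarrow> (nat \<Rightarrow> 'a) \<Rightarrow> (nat \<Rightarrow> 'a) \<Rightarrow> bool" where
  "principal_seq U V u v \<longleftrightarrow>
     (\<forall>i < min (dim U) (dim V).
        u i \<in> U \<and> v i \<in> V \<and> norm (u i) = 1 \<and> norm (v i) = 1 \<and>
        (\<forall>j<i. u i \<bullet> u j = 0 \<and> v i \<bullet> v j = 0) \<and>
        (\<forall>x\<in>U. \<forall>y\<in>V. norm x = 1 \<longrightarrow> norm y = 1 \<longrightarrow>
            (\<forall>j<i. x \<bullet> u j = 0 \<and> y \<bullet> v j = 0) \<longrightarrow> \<bar>x \<bullet> y\<bar> \<le> \<bar>u i \<bullet> v i\<bar>))"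

definition principal_angle :: "(nat \<Rightarrow> 'a::euclidean_space) \<Rightarrow> (nat \<Rightarrow> 'a) \<Rightarrow> nat \<Rightarrow> real" where
  "principal_angle u v i = arccos \<bar>u i \<bullet> v i\<bar>"

definition max0 :: "real set \<Rightarrow> real" where
  "max0 A = (if A = {} then 0 else Max A)"

definition singular_value :: "real^'d^'n \<Rightarrow> real \<Rightarrow> bool" where
  "singular_value X \<sigma> \<longleftrightarrow> \<sigma> \<ge> 0 \<and> (\<exists>x. x \<noteq> 0 \<and> (transpose X ** X) *v x = (\<sigma>\<^sup>2) *s x)"

end

theory Submission
  imports Defs
begin


definition proj :: "'a::euclidean_space set \<Rightarrow> 'a \<Rightarrow> 'a" where
  "proj S x = (SOME y. y \<in> span S \<and> (\<forall>w\<in>span S. (x - y) \<bullet> w = 0))"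

lemma proj_ex: "\<exists>y. y \<in> span (S::'a::euclidean_space set) \<and> (\<forall>w\<in>span S. (x - y) \<bullet> w = 0)"
proof -
  obtain y z where yz: "y \<in> span S" "\<And>w. w \<in> span S \<Longrightarrow> orthogonal z w" "x = y + z"
    using orthogonal_subspace_decomp_exists by metis
  have "\<forall>w\<in>span S. (x - y) \<bullet> w = 0" using yz(2,3) by (simp add: orthogonal_def)
  then show ?thesis using yz(1) by blast
qed

lemma proj_in: "proj S x \<in> span S"
  and proj_orth: "w \<in> span S \<Longrightarrow> (x - proj S x) \<bullet> w = 0"
proof -
  have "proj S x \<in> span S \<and> (\<forall>w\<in>span S. (x - proj S x) \<bullet> w = 0)"
    unfolding proj_def by (rule someI_ex[OF proj_ex])
  then show "proj S x \<in> span S" "w \<in> span S \<Longrightarrow> (x - proj S x) \<bullet> w = 0" by auto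
qed
lemma proj_unique:
  assumes "y \<in> span S" "\<And>w. w \<in> span S \<Longrightarrow> (x - y) \<bullet> w = 0"
  shows "proj S x = y"
proof -
  have "(proj S x - y) \<bullet> (proj S x - y) = 0"
  proof -
    have d: "proj S x - y \<in> span S" using proj_in assms(1) span_diff by blast
    have "(proj S x - y) = (x - y) - (x - proj S x)" by simp
    then have "(proj S x - y) \<bullet> (proj S x - y) = (x - y) \<bullet> (proj S x - y) - (x - proj S x) \<bullet> (proj S x - y)"
      by (metis inner_diff_left)
    also have "\<dots> = 0" using assms(2)[OF d] proj_orth[OF d] by simp
    finally show ?thesis .
  qed
  then show ?thesis by simp
qed

lemma proj_id: "x \<in> span S \<Longrightarrow> proj S x = x"
  by (rule proj_unique) auto

lemma proj_zero: "(\<And>w. w \<in> span S \<Longrightarrow> x \<bullet> w = 0) \<Longrightarrow> proj S x = 0"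
  by (rule proj_unique) (auto simp: span_zero)

lemma proj_add: "proj S (x + y) = proj S x + proj S y"
proof (rule proj_unique)
  show "proj S x + proj S y \<in> span S" by (intro span_add proj_in)
next
  fix w assume w: "w \<in> span S"
  have eq: "(x + y - (proj S x + proj S y)) = (x - proj S x) + (y - proj S y)" by simp
  show "(x + y - (proj S x + proj S y)) \<bullet> w = 0"
    unfolding eq inner_add_left using proj_orth[OF w, of x] proj_orth[OF w, of y] by simp
qed

lemma proj_scale: "proj S (c *\<^sub>R x) = c *\<^sub>R proj S x"
proof (rule proj_unique)
  show "c *\<^sub>R proj S x \<in> span S" by (intro span_scale proj_in)
next
  fix w assume w: "w \<in> span S"
  have eq: "(c *\<^sub>R x - c *\<^sub>R proj S x) = c *\<^sub>R (x - proj S x)" by (simp add: algebra_simps)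
  show "(c *\<^sub>R x - c *\<^sub>R proj S x) \<bullet> w = 0"
    unfolding eq inner_scaleR_left using proj_orth[OF w, of x] by simp
qed

lemma linear_proj: "linear (proj S)"
  by (rule linearI) (rule proj_add, rule proj_scale)

lemma proj_diff: "proj S (x - y) = proj S x - proj S y"
  by (rule linear_diff[OF linear_proj])

lemma proj_neg: "proj S (- x) = - proj S x"
  by (rule linear_neg[OF linear_proj])

lemma proj_sum: "proj S (sum f A) = (\<Sum>a\<in>A. proj S (f a))"
  by (rule linear_sum[OF linear_proj])

lemma proj_proj: "proj S (proj S x) = proj S x"
  by (rule proj_id[OF proj_in])

lemma proj_inner_left: "proj S x \<bullet> y = proj S x \<bullet> proj S y"
proof -
  have "(y - proj S y) \<bullet> proj S x = 0" by (rule proj_orth[OF proj_in])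
  then have "proj S x \<bullet> (y - proj S y) = 0" by (simp only: inner_commute)
  then show ?thesis by (simp add: inner_diff_right)
qed

lemma proj_sym: "proj S x \<bullet> y = x \<bullet> proj S y"
proof -
  have "proj S x \<bullet> y = proj S x \<bullet> proj S y" by (rule proj_inner_left)
  moreover have "proj S y \<bullet> x = proj S y \<bullet> proj S x" by (rule proj_inner_left)
  ultimately show ?thesis by (simp add: inner_commute)
qed

lemma proj_in_inner: "w \<in> span S \<Longrightarrow> x \<bullet> w = proj S x \<bullet> w"
  using proj_orth[of w S x] by (simp add: inner_diff_left)

lemma proj_norm2: "(norm x)\<^sup>2 = (norm (proj S x))\<^sup>2 + (norm (x - proj S x))\<^sup>2"
proof -
  have "(x - proj S x) \<bullet> proj S x = 0" by (rule proj_orth[OF proj_in])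
  then have "(norm ((x - proj S x) + proj S x))\<^sup>2 = (norm (x - proj S x))\<^sup>2 + (norm (proj S x))\<^sup>2"
    by (intro norm_add_Pythagorean) (simp add: orthogonal_def)
  then show ?thesis by simp
qed

lemma proj_norm_le: "norm (proj S x) \<le> norm x"
proof -
  have "(norm (proj S x))\<^sup>2 \<le> (norm x)\<^sup>2" using proj_norm2[of x S] by simp
  then show ?thesis using norm_ge_zero power2_le_imp_le by blast
qed


definition selfadj :: "('a::euclidean_space \<Rightarrow> 'a) \<Rightarrow> bool" where
  "selfadj f \<longleftrightarrow> linear f \<and> (\<forall>x y. f x \<bullet> y = x \<bullet> f y)"

lemma ring_id_aux: "(2 * t * a + t\<^sup>2 * c) * s\<^sup>2 = 2 * a * (t * s) * s + (t * s)\<^sup>2 * (c::real)"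
  by (simp add: power2_eq_square algebra_simps)

lemma quad_nonpos_zero:
  fixes a c :: real
  assumes "\<And>t. 2 * t * a + t\<^sup>2 * c \<le> 0"
  shows "a = 0"
proof -
  define t where "t = a / (\<bar>c\<bar> + 1)"
  have pos: "\<bar>c\<bar> + 1 > 0" by simp
  define s where "s = \<bar>c\<bar> + 1"
  have ts: "t * s = a" unfolding t_def s_def using pos by simp
  have "2 * t * a + t\<^sup>2 * c \<le> 0" by (rule assms)
  then have "(2 * t * a + t\<^sup>2 * c) * s\<^sup>2 \<le> 0"
    by (simp add: mult_nonpos_nonneg)
  moreover have "(2 * t * a + t\<^sup>2 * c) * s\<^sup>2 = 2 * a * (t * s) * s + (t * s)\<^sup>2 * c"
    by (rule ring_id_aux)
  moreover have "2 * a * (t * s) * s + (t * s)\<^sup>2 * c = a\<^sup>2 * (2 * (\<bar>c\<bar> + 1) + c)"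
    unfolding ts by (simp add: s_def power2_eq_square algebra_simps)
  ultimately have "a\<^sup>2 * (2 * (\<bar>c\<bar> + 1) + c) \<le> 0" by simp
  moreover have "2 * (\<bar>c\<bar> + 1) + c > 0" using abs_ge_self[of c] abs_ge_minus_self[of c] by (simp add: abs_if)
  ultimately have "a\<^sup>2 \<le> 0" by (simp add: mult_le_0_iff)
  then show ?thesis by simp
qed

lemma eigvec_exists:
  fixes f :: "'a::euclidean_space \<Rightarrow> 'a"
  assumes sa: "selfadj f" and S: "subspace S" and inv: "\<And>x. x \<in> S \<Longrightarrow> f x \<in> S"
    and ne: "S \<noteq> {0}"
  shows "\<exists>e\<in>S. norm e = 1 \<and> f e = (f e \<bullet> e) *\<^sub>R e"
proof -
  have lin: "linear f" and sym: "\<And>x y. f x \<bullet> y = x \<bullet> f y" using sa unfolding selfadj_def by auto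
  define K where "K = S \<inter> sphere 0 1"
  have "compact K" unfolding K_def using closed_subspace[OF S] compact_sphere by blast
  moreover have "K \<noteq> {}"
  proof -
    obtain x where x: "x \<in> S" "x \<noteq> 0" using ne subspace_0[OF S] by blast
    have "(1 / norm x) *\<^sub>R x \<in> S" using x(1) S by (simp add: subspace_scale)
    moreover have "norm ((1 / norm x) *\<^sub>R x) = 1" using x(2) by simp
    ultimately show ?thesis unfolding K_def by auto
  qed
  moreover have "continuous_on K (\<lambda>x. f x \<bullet> x)"
  proof -
    have "bounded_linear f" using lin by (simp add: linear_conv_bounded_linear)
    then have "continuous_on K f" by (rule linear_continuous_on)
    then show ?thesis by (intro continuous_intros) auto
  qed
  ultimately obtain e where e: "e \<in> K" and emax: "\<And>y. y \<in> K \<Longrightarrow> f y \<bullet> y \<le> f e \<bullet> e"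
    using continuous_attains_sup[of K "\<lambda>x. f x \<bullet> x"] by blast
  have eS: "e \<in> S" and en: "norm e = 1" using e unfolding K_def by auto
  have ee: "e \<bullet> e = 1" using en by (simp add: norm_eq_1)
  define m where "m = f e \<bullet> e"
  have quad: "f z \<bullet> z \<le> m * (z \<bullet> z)" if z: "z \<in> S" for z
  proof (cases "z = 0")
    case True then show ?thesis by (simp add: linear_0[OF lin])
  next
    case False
    define c where "c = 1 / norm z"
    have "c *\<^sub>R z \<in> K" unfolding K_def c_def using z S False by (simp add: subspace_scale)
    then have "f (c *\<^sub>R z) \<bullet> (c *\<^sub>R z) \<le> m" using emax m_def by blast
    then have "c\<^sup>2 * (f z \<bullet> z) \<le> m" by (simp add: linear_scale[OF lin] power2_eq_square)
    moreover have "c\<^sup>2 * (z \<bullet> z) = 1"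
    proof -
      have "c\<^sup>2 * (z \<bullet> z) = (c * norm z)\<^sup>2" by (simp add: dot_square_norm power_mult_distrib)
      also have "c * norm z = 1" unfolding c_def using False by simp
      finally show ?thesis by simp
    qed
    ultimately have "c\<^sup>2 * (f z \<bullet> z) \<le> m * (c\<^sup>2 * (z \<bullet> z))" by simp
    moreover have "c\<^sup>2 > 0" unfolding c_def using False by simp
    ultimately show ?thesis by (simp add: algebra_simps)
  qed
  have stat: "f e \<bullet> y = 0" if y: "y \<in> S" "y \<bullet> e = 0" for y
  proof -
    have "2 * t * (f e \<bullet> y) + t\<^sup>2 * (f y \<bullet> y - m * (y \<bullet> y)) \<le> 0" for t
    proof -
      have zS: "e + t *\<^sub>R y \<in> S" using eS y(1) S by (simp add: subspace_add subspace_scale)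
      have "f (e + t *\<^sub>R y) \<bullet> (e + t *\<^sub>R y) = m + 2 * t * (f e \<bullet> y) + t\<^sup>2 * (f y \<bullet> y)"
        using sym[of y e] unfolding m_def
        by (simp add: linear_add[OF lin] linear_scale[OF lin] inner_add_left inner_add_right
            power2_eq_square inner_commute algebra_simps)
      moreover have "(e + t *\<^sub>R y) \<bullet> (e + t *\<^sub>R y) = 1 + t\<^sup>2 * (y \<bullet> y)"
        using ee y(2) by (simp add: inner_add_left inner_add_right power2_eq_square inner_commute)
      ultimately show ?thesis using quad[OF zS] by (simp add: algebra_simps)
    qed
    then show ?thesis by (rule quad_nonpos_zero)
  qed
  define d where "d = f e - m *\<^sub>R e"
  have dS: "d \<in> S" unfolding d_def using inv[OF eS] eS S by (simp add: subspace_diff subspace_scale)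
  have de: "d \<bullet> e = 0" unfolding d_def m_def using ee by (simp add: inner_diff_left)
  have "d \<bullet> d = f e \<bullet> d - m * (e \<bullet> d)" unfolding d_def by (simp add: inner_diff_left)
  also have "\<dots> = 0" using stat[OF dS de] de by (simp add: inner_commute)
  finally have "d = 0" by simp
  then show ?thesis using eS en unfolding d_def m_def by auto
qed

lemma spectral_sub:
  fixes f :: "'a::euclidean_space \<Rightarrow> 'a"
  assumes sa: "selfadj f"
  shows "subspace S \<Longrightarrow> (\<And>x. x \<in> S \<Longrightarrow> f x \<in> S) \<Longrightarrow>
    \<exists>E. finite E \<and> E \<subseteq> S \<and> (\<forall>e\<in>E. norm e = 1 \<and> f e = (f e \<bullet> e) *\<^sub>R e)
       \<and> pairwise orthogonal E \<and> span E = S"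
proof (induction "dim S" arbitrary: S rule: less_induct)
  case (less S)
  have lin: "linear f" and sym: "\<And>x y. f x \<bullet> y = x \<bullet> f y" using sa unfolding selfadj_def by auto
  show ?case
  proof (cases "S = {0}")
    case True
    then show ?thesis by (intro exI[of _ "{}"]) auto
  next
    case False
    obtain e where eS: "e \<in> S" and en: "norm e = 1" and fe: "f e = (f e \<bullet> e) *\<^sub>R e"
      using eigvec_exists[OF sa less.prems(1) less.prems(2) False] by blast
    have ee: "e \<bullet> e = 1" using en by (simp add: norm_eq_1)
    define S' where "S' = {x \<in> S. x \<bullet> e = 0}"
    have sub': "subspace S'" unfolding S'_def subspace_def using less.prems(1)
      by (auto simp: subspace_def inner_add_left)
    have inv': "f x \<in> S'" if "x \<in> S'" for x
    proof -
      have "f x \<bullet> e = x \<bullet> f e" by (rule sym)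
      also have "\<dots> = (f e \<bullet> e) * (x \<bullet> e)" by (subst fe) simp
      also have "\<dots> = 0" using that unfolding S'_def by simp
      finally show ?thesis using that less.prems(2) unfolding S'_def by auto
    qed
    have "e \<notin> S'" unfolding S'_def using ee by auto
    then have "S' \<subset> S" using eS unfolding S'_def by blast
    moreover have e1: "span S' = S'" using sub' by (rule span_eq_iff[THEN iffD2])
    moreover have e2: "span S = S" using less.prems(1) by (rule span_eq_iff[THEN iffD2])
    ultimately have "span S' \<subset> span S" by (simp only: e1 e2)
    then have "dim S' < dim S" by (rule dim_psubset)
    then obtain E where E: "finite E" "E \<subseteq> S'" "\<forall>e\<in>E. norm e = 1 \<and> f e = (f e \<bullet> e) *\<^sub>R e"
      "pairwise orthogonal E" "span E = S'"
      using less.hyps[OF _ sub' inv'] by blast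
    show ?thesis
    proof (intro exI[of _ "insert e E"] conjI)
      show "finite (insert e E)" using E(1) by simp
      show "insert e E \<subseteq> S" using E(2) eS unfolding S'_def by auto
      show "\<forall>x\<in>insert e E. norm x = 1 \<and> f x = (f x \<bullet> x) *\<^sub>R x" using E(3) en fe by auto
      have eorth: "orthogonal e x" if "x \<in> E" for x
        using E(2) that unfolding S'_def orthogonal_def by (auto simp: inner_commute)
      show "pairwise orthogonal (insert e E)"
        using E(4) eorth by (auto simp: pairwise_insert orthogonal_commute)
      show "span (insert e E) = S"
      proof
        show "span (insert e E) \<subseteq> S"
          using \<open>insert e E \<subseteq> S\<close> less.prems(1) by (simp add: span_minimal)
        show "S \<subseteq> span (insert e E)"
        proof
          fix x assume x: "x \<in> S"
          have "x - (x \<bullet> e) *\<^sub>R e \<in> S'" unfolding S'_def using x eS less.prems(1) ee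
            by (simp add: subspace_diff subspace_scale inner_diff_left)
          then have "x - (x \<bullet> e) *\<^sub>R e \<in> span E" using E(5) by simp
          then show "x \<in> span (insert e E)" unfolding span_insert by auto
        qed
      qed
    qed
  qed
qed

lemma spectral:
  fixes f :: "'a::euclidean_space \<Rightarrow> 'a"
  assumes sa: "selfadj f"
  obtains E where "finite E" "\<And>e. e \<in> E \<Longrightarrow> norm e = 1" "\<And>e. e \<in> E \<Longrightarrow> f e = (f e \<bullet> e) *\<^sub>R e"
       "pairwise orthogonal E" "span E = UNIV"
  using spectral_sub[OF sa, of UNIV] by auto

lemma onb_inner_delta:
  assumes "\<And>e. e \<in> E \<Longrightarrow> norm e = 1" "pairwise orthogonal E" "e \<in> E" "e' \<in> E"
  shows "e \<bullet> e' = (if e = e' then 1 else 0)"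
  using assms unfolding pairwise_def orthogonal_def by (auto simp: norm_eq_1)

lemma onb_expand:
  fixes x :: "'a::euclidean_space"
  assumes fin: "finite E" and n1: "\<And>e. e \<in> E \<Longrightarrow> norm e = 1" and po: "pairwise orthogonal E"
    and sp: "span E = UNIV"
  shows "x = (\<Sum>e\<in>E. (x \<bullet> e) *\<^sub>R e)"
proof -
  define z where "z = x - (\<Sum>e\<in>E. (x \<bullet> e) *\<^sub>R e)"
  have "z \<bullet> e' = 0" if e': "e' \<in> E" for e'
  proof -
    have "(\<Sum>e\<in>E. (x \<bullet> e) *\<^sub>R e) \<bullet> e' = (\<Sum>e\<in>E. (x \<bullet> e) * (e \<bullet> e'))"
      by (simp add: inner_sum_left)
    also have "\<dots> = (\<Sum>e\<in>E. if e = e' then x \<bullet> e else 0)"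
      by (rule sum.cong) (auto simp: onb_inner_delta[OF n1 po _ e'])
    also have "\<dots> = x \<bullet> e'" using fin e' by (simp add: sum.delta)
    finally show ?thesis unfolding z_def by (simp add: inner_diff_left)
  qed
  then have "orthogonal z z"
    by (intro orthogonal_to_span[of z E z]) (auto simp: sp orthogonal_def)
  then have "z = 0" by (simp add: orthogonal_def)
  then show ?thesis unfolding z_def by simp
qed

lemma onb_inner:
  fixes x y :: "'a::euclidean_space"
  assumes fin: "finite E" and n1: "\<And>e. e \<in> E \<Longrightarrow> norm e = 1" and po: "pairwise orthogonal E"
    and sp: "span E = UNIV"
  shows "x \<bullet> y = (\<Sum>e\<in>E. (x \<bullet> e) * (y \<bullet> e))"
proof -
  have "x \<bullet> y = x \<bullet> (\<Sum>e\<in>E. (y \<bullet> e) *\<^sub>R e)" using onb_expand[OF assms, of y] by simp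
  also have "\<dots> = (\<Sum>e\<in>E. (x \<bullet> e) * (y \<bullet> e))" by (simp add: inner_sum_right mult.commute)
  finally show ?thesis .
qed


lemma mv_inner_transpose: "(X *v z) \<bullet> y = z \<bullet> (transpose X *v y)"
  for X :: "real^'d^'n"
proof -
  have "z \<bullet> (transpose X *v y) = (y v* X) \<bullet> z" by (simp add: inner_commute)
  also have "\<dots> = y \<bullet> (X *v z)" by (rule dot_lmul_matrix)
  finally show ?thesis by (simp add: inner_commute)
qed

lemma subspace_rowspace: "subspace (rowspace X)"
  unfolding rowspace_def
  by (rule linear_subspace_image) (auto intro: subspace_UNIV)

lemma span_rowspace[simp]: "span (rowspace X) = rowspace X"
  using subspace_rowspace span_eq_iff by blast

lemma subspace_colspace: "subspace (range (\<lambda>z. (X::real^'d^'n) *v z))"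
  by (rule linear_subspace_image) (auto intro: subspace_UNIV)

lemma span_colspace[simp]: "span (range (\<lambda>z. (X::real^'d^'n) *v z)) = range (\<lambda>z. X *v z)"
  using subspace_colspace span_eq_iff by blast

lemma null_iff_orth:
  fixes X :: "real^'d^'n"
  shows "X *v z = 0 \<longleftrightarrow> (\<forall>w\<in>rowspace X. z \<bullet> w = 0)"
proof
  assume "X *v z = 0"
  then show "\<forall>w\<in>rowspace X. z \<bullet> w = 0"
    unfolding rowspace_def using mv_inner_transpose[of X z] by auto
next
  assume h: "\<forall>w\<in>rowspace X. z \<bullet> w = 0"
  have "(X *v z) \<bullet> (X *v z) = z \<bullet> (transpose X *v (X *v z))" by (rule mv_inner_transpose)
  also have "\<dots> = 0" using h unfolding rowspace_def by auto
  finally show "X *v z = 0" by simp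
qed

abbreviation Qr :: "real^'d^'n \<Rightarrow> real^'d \<Rightarrow> real^'d" where
  "Qr X \<equiv> proj (rowspace X)"

lemma mv_proj: "X *v (Qr X z) = X *v z"
proof -
  have "X *v (z - Qr X z) = 0"
    unfolding null_iff_orth using proj_orth[of _ "rowspace X" z] by simp
  then show ?thesis by (simp add: matrix_vector_mult_diff_distrib)
qed

lemma proj_null: "X *v z = 0 \<Longrightarrow> Qr X z = 0"
  by (rule proj_zero) (simp add: null_iff_orth)

lemma rowspace_inj: "x \<in> rowspace X \<Longrightarrow> x' \<in> rowspace X \<Longrightarrow> X *v x = X *v x' \<Longrightarrow> x = x'"
proof -
  assume a: "x \<in> rowspace X" "x' \<in> rowspace X" "X *v x = X *v x'"
  have "X *v (x - x') = 0" using a(3) by (simp add: matrix_vector_mult_diff_distrib)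
  then have "Qr X (x - x') = 0" by (rule proj_null)
  moreover have "Qr X (x - x') = x - x'"
    using a(1,2) by (intro proj_id) (simp add: subspace_diff[OF subspace_rowspace])
  ultimately show ?thesis by simp
qed

definition colproj :: "real^'d^'n \<Rightarrow> real^'n \<Rightarrow> real^'n" where
  "colproj X = proj (range (\<lambda>z. X *v z))"

definition bf :: "real^'d^'n \<Rightarrow> real^'n \<Rightarrow> real^'d" where
  "bf X y = Qr X (SOME z. X *v z = colproj X y)"

lemma colproj_in: "\<exists>z. X *v z = colproj X y"
proof -
  have "colproj X y \<in> span (range (\<lambda>z. X *v z))" unfolding colproj_def by (rule proj_in)
  then show ?thesis by auto
qed

lemma bf_props: "bf X y \<in> rowspace X" "X *v bf X y = colproj X y"
proof -
  have s: "X *v (SOME z. X *v z = colproj X y) = colproj X y" by (rule someI_ex[OF colproj_in])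
  show "bf X y \<in> rowspace X" unfolding bf_def using proj_in[of "rowspace X"] by simp
  show "X *v bf X y = colproj X y" unfolding bf_def mv_proj s ..
qed

lemma bf_unique: "x \<in> rowspace X \<Longrightarrow> X *v x = colproj X y \<Longrightarrow> bf X y = x"
  using rowspace_inj bf_props by metis

lemma colproj_add: "colproj X (a + b) = colproj X a + colproj X b"
  unfolding colproj_def by (rule proj_add)
lemma colproj_scale: "colproj X (c *\<^sub>R a) = c *\<^sub>R colproj X a"
  unfolding colproj_def by (rule proj_scale)

lemma linear_bf: "linear (bf X)"
proof (rule linearI)
  fix a b
  show "bf X (a + b) = bf X a + bf X b"
    by (rule bf_unique) (simp_all add: bf_props colproj_add matrix_vector_right_distrib
        subspace_add[OF subspace_rowspace])
next
  fix c a
  show "bf X (c *\<^sub>R a) = c *\<^sub>R bf X a"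
    by (rule bf_unique) (simp_all add: bf_props colproj_scale matrix_vector_mult_scaleR
        subspace_scale[OF subspace_rowspace])
qed

lemma bf_X: "bf X (X *v z) = Qr X z"
proof (rule bf_unique)
  show "Qr X z \<in> rowspace X" using proj_in[of "rowspace X" z] by simp
  have "colproj X (X *v z) = X *v z" unfolding colproj_def by (rule proj_id) auto
  then show "X *v Qr X z = colproj X (X *v z)" by (simp add: mv_proj)
qed

lemma sym_matrix:
  fixes A :: "real^'n^'n"
  assumes "\<And>x y. (A *v x) \<bullet> y = x \<bullet> (A *v y)"
  shows "transpose A = A"
proof -
  have "transpose A *v x = A *v x" for x
  proof -
    define d where "d = transpose A *v x - A *v x"
    have "d \<bullet> d = (transpose A *v x) \<bullet> d - (A *v x) \<bullet> d" unfolding d_def by (simp add: inner_diff_left)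
    also have "(transpose A *v x) \<bullet> d = x \<bullet> (A *v d)"
      using mv_inner_transpose[of "transpose A" x d] by simp
    also have "(A *v x) \<bullet> d = x \<bullet> (A *v d)" by (rule assms)
    finally show ?thesis unfolding d_def by simp
  qed
  then show ?thesis by (simp add: matrix_eq)
qed

definition Bm :: "real^'d^'n \<Rightarrow> real^'n^'d" where
  "Bm X = matrix (bf X)"

lemma Bm_works: "Bm X *v y = bf X y"
  unfolding Bm_def using matrix_vector_mul(2)[OF linear_bf] by metis

lemma penrose_unique:
  fixes A :: "real^'d^'n" and B C :: "real^'n^'d"
  assumes B1: "A ** B ** A = A" and B2: "B ** A ** B = B"
    and B3: "transpose (A ** B) = A ** B" and B4: "transpose (B ** A) = B ** A"
    and C1: "A ** C ** A = A" and C2: "C ** A ** C = C"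
    and C3: "transpose (A ** C) = A ** C" and C4: "transpose (C ** A) = C ** A"
  shows "B = C"
proof -
  have "B = B ** (A ** B)" using B2 by (simp add: matrix_mul_assoc)
  also have "\<dots> = B ** transpose (A ** B)" using B3 by simp
  also have "\<dots> = B ** (transpose B ** transpose A)" by (simp add: matrix_transpose_mul)
  also have "transpose A = transpose (A ** C ** A)" using C1 by simp
  also have "\<dots> = transpose A ** transpose (A ** C)" by (simp add: matrix_transpose_mul)
  also have "\<dots> = transpose A ** (A ** C)" using C3 by simp
  also have "B ** (transpose B ** (transpose A ** (A ** C))) = B ** (transpose (A ** B) ** (A ** C))"
    by (simp add: matrix_transpose_mul matrix_mul_assoc)
  also have "\<dots> = B ** ((A ** B) ** (A ** C))" using B3 by simp
  also have "\<dots> = (B ** A ** B) ** A ** C" by (simp add: matrix_mul_assoc)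
  also have "\<dots> = B ** A ** C" using B2 by simp
  finally have b: "B = B ** A ** C" .
  have "C = (C ** A) ** C" using C2 by simp
  also have "\<dots> = transpose (C ** A) ** C" using C4 by simp
  also have "\<dots> = (transpose A ** transpose C) ** C" by (simp add: matrix_transpose_mul)
  also have "transpose A = transpose (A ** B ** A)" using B1 by simp
  also have "\<dots> = transpose (B ** A) ** transpose A" by (simp add: matrix_transpose_mul matrix_mul_assoc)
  also have "\<dots> = (B ** A) ** transpose A" using B4 by simp
  also have "((B ** A) ** transpose A ** transpose C) ** C = (B ** A) ** (transpose (C ** A)) ** C"
    by (simp add: matrix_transpose_mul matrix_mul_assoc)
  also have "\<dots> = (B ** A) ** (C ** A) ** C" using C4 by simp
  also have "\<dots> = B ** A ** (C ** A ** C)" by (simp add: matrix_mul_assoc)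
  also have "\<dots> = B ** A ** C" using C2 by simp
  finally have c: "C = B ** A ** C" .
  show ?thesis using b c by simp
qed

lemma pinv_eq: "pinv X = Bm X"
proof -
  let ?B = "Bm X"
  have P1: "X ** ?B ** X = X"
    by (simp add: matrix_eq matrix_vector_mul_assoc[symmetric] Bm_works bf_X mv_proj)
  have P2: "?B ** X ** ?B = ?B"
  proof -
    have "Qr X (bf X y) = bf X y" for y using bf_props(1)[of X y] by (intro proj_id) simp
    then show ?thesis by (simp add: matrix_eq matrix_vector_mul_assoc[symmetric] Bm_works bf_X)
  qed
  have P3: "transpose (X ** ?B) = X ** ?B"
  proof (rule sym_matrix)
    fix x y
    show "((X ** ?B) *v x) \<bullet> y = x \<bullet> ((X ** ?B) *v y)"
      by (simp add: matrix_vector_mul_assoc[symmetric] Bm_works bf_props colproj_def proj_sym)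
  qed
  have P4: "transpose (?B ** X) = ?B ** X"
  proof (rule sym_matrix)
    fix x y
    show "((?B ** X) *v x) \<bullet> y = x \<bullet> ((?B ** X) *v y)"
      by (simp add: matrix_vector_mul_assoc[symmetric] Bm_works bf_X proj_sym)
  qed
  show ?thesis unfolding pinv_def
  proof (rule the_equality)
    show "X ** ?B ** X = X \<and> ?B ** X ** ?B = ?B \<and> transpose (X ** ?B) = X ** ?B \<and> transpose (?B ** X) = ?B ** X"
      using P1 P2 P3 P4 by blast
    fix C assume "X ** C ** X = X \<and> C ** X ** C = C \<and> transpose (X ** C) = X ** C \<and> transpose (C ** X) = C ** X"
    then show "C = ?B" using penrose_unique[OF _ _ _ _ P1 P2 P3 P4] by blast
  qed
qed

lemma pinv_X: "pinv X *v (X *v z) = Qr X z"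
  by (simp add: pinv_eq Bm_works bf_X)

lemma pinv_X_mat: "pinv X ** X = matrix (Qr X)"
proof -
  have "linear (Qr X)" by (rule linear_proj)
  then show ?thesis
    by (simp add: matrix_eq matrix_vector_mul_assoc[symmetric] pinv_X matrix_works linear_matrix_vector_mul_eq)
qed

lemma kerproj_apply: "kerproj X *v z = z - Qr X z"
  unfolding kerproj_def by (simp add: matrix_vector_mult_diff_rdistrib matrix_vector_mul_assoc[symmetric] pinv_X)

lemma one_minus_kerproj: "(mat 1 - kerproj X) *v z = Qr X z"
  by (simp add: matrix_vector_mult_diff_rdistrib kerproj_apply)


abbreviation G :: "real^'d^'n1 \<Rightarrow> real^'d^'n2 \<Rightarrow> real^'d \<Rightarrow> real^'d" where
  "G X1 X2 \<equiv> (\<lambda>x. kerproj X2 *v (kerproj X1 *v x))"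

lemma mv_neg: "A *v (- x) = - (A *v (x::real^'a))" for A :: "real^'a^'b"
  using linear_neg[OF matrix_vector_mul_linear[of A]] by simp

lemma tau2_odd: "tau2 (Suc (2 * m)) = 1"
  unfolding tau2_def by simp

lemma tau2_even: "tau2 (Suc (Suc (2 * m))) = 2"
  unfolding tau2_def by (simp add: mod_Suc)

lemma pinv_step:
  assumes "X *v z = y"
  shows "(z + e) + pinv X *v (y - X *v (z + e)) = z + kerproj X *v e"
proof -
  have "y - X *v (z + e) = X *v (- e)" using assms
    by (simp add: matrix_vector_right_distrib mv_neg algebra_simps)
  then have "pinv X *v (y - X *v (z + e)) = Qr X (- e)" by (simp add: pinv_X)
  then show ?thesis by (simp add: kerproj_apply proj_neg)
qed

lemma cyc_iter_even:
  assumes z1: "X1 *v z = y1" and z2: "X2 *v z = y2"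
  shows "cyc_iter X1 y1 X2 y2 (2 * m) = z + ((G X1 X2) ^^ m) (- z)"
proof (induction m)
  case 0
  then show ?case by simp
next
  case (Suc m)
  define e where "e = ((G X1 X2) ^^ m) (- z)"
  have "cyc_iter X1 y1 X2 y2 (Suc (2 * m)) = z + kerproj X1 *v e"
    using Suc.IH pinv_step[OF z1, of e] by (simp add: tau2_odd Let_def e_def)
  then have "cyc_iter X1 y1 X2 y2 (Suc (Suc (2 * m))) = z + kerproj X2 *v (kerproj X1 *v e)"
    using pinv_step[OF z2, of "kerproj X1 *v e"] by (simp add: tau2_even Let_def)
  then show ?case by (simp add: e_def)
qed

lemma sum_alt: "(\<Sum>t\<in>{1..2*n}. (if tau2 t = 1 then a else b)) = real n * a + real n * b"
proof (induction n)
  case 0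
  then show ?case by simp
next
  case (Suc n)
  have "{1..2 * Suc n} = insert (Suc (2*n)) (insert (Suc (Suc (2*n))) {1..2*n})" by auto
  then have "(\<Sum>t\<in>{1..2*Suc n}. (if tau2 t = 1 then a else b))
     = (if tau2 (Suc (2*n)) = 1 then a else b) + (if tau2 (Suc (Suc (2*n))) = 1 then a else b)
       + (\<Sum>t\<in>{1..2*n}. (if tau2 t = 1 then a else b))"
    by simp
  also have "\<dots> = a + b + (real n * a + real n * b)" using Suc.IH by (simp add: tau2_odd tau2_even)
  finally show ?case by (simp add: algebra_simps)
qed

lemma kerproj_null: "X *v (kerproj X *v x) = 0"
  by (simp add: kerproj_apply matrix_vector_mult_diff_distrib mv_proj)

lemma G_neg: "((G X1 X2) ^^ m) (- x) = - (((G X1 X2) ^^ m) x)"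
  by (induction m) (simp_all add: mv_neg)

lemma forgetting_formula:
  assumes z1: "X1 *v z = y1" and z2: "X2 *v z = y2" and n: "n \<ge> 1"
  shows "forgetting X1 y1 X2 y2 (2 * n) = (1/2) * (norm (X1 *v ((G X1 X2) ^^ n) z))\<^sup>2"
proof -
  define e where "e = ((G X1 X2) ^^ n) (- z)"
  have wk: "cyc_iter X1 y1 X2 y2 (2 * n) = z + e" unfolding e_def by (rule cyc_iter_even[OF z1 z2])
  have r1: "X1 *v (z + e) - y1 = X1 *v e" using z1 by (simp add: matrix_vector_right_distrib)
  obtain m where m: "n = Suc m" using n by (cases n) auto
  have r2: "X2 *v (z + e) - y2 = 0" using z2 unfolding e_def m
    by (simp add: matrix_vector_right_distrib kerproj_null)
  have "forgetting X1 y1 X2 y2 (2 * n) = (1 / real (2 * n)) *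
      (\<Sum>t\<in>{1..2*n}. (if tau2 t = 1 then (norm (X1 *v e))\<^sup>2 else 0))"
    unfolding forgetting_def Let_def wk r1 r2 norm_zero zero_power2 by simp
  also have "\<dots> = (1 / real (2 * n)) * (real n * (norm (X1 *v e))\<^sup>2 + real n * 0)"
    by (simp only: sum_alt)
  also have "\<dots> = (1/2) * (norm (X1 *v e))\<^sup>2" using n by simp
  also have "norm (X1 *v e) = norm (X1 *v ((G X1 X2) ^^ n) z)"
    unfolding e_def G_neg by (simp add: mv_neg)
  finally show ?thesis .
qed


abbreviation WW :: "real^'d^'n1 \<Rightarrow> real^'d^'n2 \<Rightarrow> (real^'d) set" where
  "WW X1 X2 \<equiv> span (rowspace X1 \<union> rowspace X2)"

lemma null2_orth:
  assumes "X1 *v z = 0" "X2 *v z = 0" "w \<in> WW X1 X2"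
  shows "z \<bullet> w = 0"
proof -
  have "orthogonal z w"
  proof (rule orthogonal_to_span[OF assms(3)])
    fix y assume "y \<in> rowspace X1 \<union> rowspace X2"
    then show "orthogonal z y" using assms(1,2) unfolding null_iff_orth orthogonal_def by auto
  qed
  then show ?thesis by (simp add: orthogonal_def)
qed

lemma min_norm_sol_eq:
  assumes g: "g \<in> WW X1 X2" and g1: "X1 *v g = y1" and g2: "X2 *v g = y2"
  shows "min_norm_sol X1 y1 X2 y2 = g"
proof -
  have pyth: "(norm v)\<^sup>2 = (norm g)\<^sup>2 + (norm (v - g))\<^sup>2" if "X1 *v v = y1" "X2 *v v = y2" for v
  proof -
    have "X1 *v (v - g) = 0" "X2 *v (v - g) = 0" using that g1 g2
      by (simp_all add: matrix_vector_mult_diff_distrib)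
    then have "(v - g) \<bullet> g = 0" using null2_orth g by blast
    then have "(norm ((v - g) + g))\<^sup>2 = (norm (v - g))\<^sup>2 + (norm g)\<^sup>2"
      by (intro norm_add_Pythagorean) (simp add: orthogonal_def)
    then show ?thesis by simp
  qed
  show ?thesis unfolding min_norm_sol_def
  proof (rule the_equality)
    show "(X1 *v g = y1 \<and> X2 *v g = y2) \<and> (\<forall>v. X1 *v v = y1 \<and> X2 *v v = y2 \<longrightarrow> norm g \<le> norm v)"
    proof (intro conjI allI impI g1 g2)
      fix v assume "X1 *v v = y1 \<and> X2 *v v = y2"
      then have "(norm g)\<^sup>2 \<le> (norm v)\<^sup>2" using pyth by simp
      then show "norm g \<le> norm v" using norm_ge_zero power2_le_imp_le by blast
    qed
  next
    fix w assume w: "(X1 *v w = y1 \<and> X2 *v w = y2) \<and> (\<forall>v. X1 *v v = y1 \<and> X2 *v v = y2 \<longrightarrow> norm w \<le> norm v)"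
    then have "norm w \<le> norm g" using g1 g2 by blast
    then have "(norm w)\<^sup>2 \<le> (norm g)\<^sup>2" by (simp add: power_mono)
    moreover have "(norm w)\<^sup>2 = (norm g)\<^sup>2 + (norm (w - g))\<^sup>2" using pyth w by blast
    ultimately have "(norm (w - g))\<^sup>2 = 0" by simp
    then show "w = g" by simp
  qed
qed

lemma min_norm_sol_props:
  assumes w1: "X1 *v w = y1" and w2: "X2 *v w = y2"
  shows "X1 *v min_norm_sol X1 y1 X2 y2 = y1" "X2 *v min_norm_sol X1 y1 X2 y2 = y2"
    "norm (min_norm_sol X1 y1 X2 y2) \<le> norm w" "min_norm_sol X1 y1 X2 y2 \<in> WW X1 X2"
proof -
  define g where "g = proj (rowspace X1 \<union> rowspace X2) w"
  have gW: "g \<in> WW X1 X2" unfolding g_def by (rule proj_in)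
  have orth: "(w - g) \<bullet> u = 0" if "u \<in> WW X1 X2" for u unfolding g_def by (rule proj_orth[OF that])
  have "X1 *v (w - g) = 0" unfolding null_iff_orth using orth span_base by blast
  then have g1: "X1 *v g = y1" using w1 by (simp add: matrix_vector_mult_diff_distrib)
  have "X2 *v (w - g) = 0" unfolding null_iff_orth using orth span_base by blast
  then have g2: "X2 *v g = y2" using w2 by (simp add: matrix_vector_mult_diff_distrib)
  have eq: "min_norm_sol X1 y1 X2 y2 = g" by (rule min_norm_sol_eq[OF gW g1 g2])
  show "X1 *v min_norm_sol X1 y1 X2 y2 = y1" "X2 *v min_norm_sol X1 y1 X2 y2 = y2"
    "min_norm_sol X1 y1 X2 y2 \<in> WW X1 X2" using eq g1 g2 gW by auto
  show "norm (min_norm_sol X1 y1 X2 y2) \<le> norm w" unfolding eq g_def by (rule proj_norm_le)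
qed


lemma unit_bound:
  fixes S :: "'a::euclidean_space set"
  assumes S: "subspace S" and mx: "\<And>x. x \<in> S \<Longrightarrow> norm x = 1 \<Longrightarrow> \<bar>x \<bullet> v\<bar> \<le> m"
    and z: "z \<in> S"
  shows "\<bar>z \<bullet> v\<bar> \<le> m * norm z"
proof (cases "z = 0")
  case True then show ?thesis by simp
next
  case False
  have "(1 / norm z) *\<^sub>R z \<in> S" using z S by (simp add: subspace_scale)
  moreover have "norm ((1 / norm z) *\<^sub>R z) = 1" using False by simp
  ultimately have "\<bar>((1 / norm z) *\<^sub>R z) \<bullet> v\<bar> \<le> m" by (rule mx)
  then have "\<bar>z \<bullet> v\<bar> / norm z \<le> m" by (simp add: abs_mult)
  then show ?thesis using False by (simp add: divide_le_eq mult.commute)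
qed

lemma stat_gen:
  fixes S :: "'a::euclidean_space set"
  assumes S: "subspace S" and uS: "u \<in> S" and un: "norm u = 1"
    and mx: "\<And>x. x \<in> S \<Longrightarrow> norm x = 1 \<Longrightarrow> \<bar>x \<bullet> v\<bar> \<le> \<bar>u \<bullet> v\<bar>"
    and x: "x \<in> S"
  shows "x \<bullet> v = (u \<bullet> v) * (x \<bullet> u)"
proof -
  have uu: "u \<bullet> u = 1" using un by (simp add: norm_eq_1)
  define x' where "x' = x - (x \<bullet> u) *\<^sub>R u"
  have x'S: "x' \<in> S" unfolding x'_def using x uS S by (simp add: subspace_diff subspace_scale)
  have x'u: "x' \<bullet> u = 0" unfolding x'_def using uu by (simp add: inner_diff_left)
  define c where "c = u \<bullet> v"
  define a where "a = x' \<bullet> v"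
  have "c * a = 0"
  proof (rule quad_nonpos_zero[where c = "a\<^sup>2 - c\<^sup>2 * (x' \<bullet> x')"])
    fix t :: real
    define z where "z = u + t *\<^sub>R x'"
    have zS: "z \<in> S" unfolding z_def using uS x'S S by (simp add: subspace_add subspace_scale)
    have zv: "z \<bullet> v = c + t * a" unfolding z_def c_def a_def by (simp add: inner_add_left)
    have zz: "z \<bullet> z = 1 + t\<^sup>2 * (x' \<bullet> x')" unfolding z_def using uu x'u
      by (simp add: inner_add_left inner_add_right inner_commute power2_eq_square)
    have "\<bar>z \<bullet> v\<bar> \<le> \<bar>c\<bar> * norm z" unfolding c_def by (rule unit_bound[OF S mx zS])
    then have "(z \<bullet> v)\<^sup>2 \<le> (\<bar>c\<bar> * norm z)\<^sup>2"
      by (metis abs_ge_zero power2_abs power_mono)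
    also have "\<dots> = c\<^sup>2 * (z \<bullet> z)" by (simp add: power_mult_distrib dot_square_norm)
    finally have "(c + t * a)\<^sup>2 \<le> c\<^sup>2 * (1 + t\<^sup>2 * (x' \<bullet> x'))" using zv zz by simp
    then show "2 * t * (c * a) + t\<^sup>2 * (a\<^sup>2 - c\<^sup>2 * (x' \<bullet> x')) \<le> 0"
      by (simp add: power2_eq_square algebra_simps)
  qed
  moreover have "a = 0" if "c = 0"
  proof -
    have "\<bar>x' \<bullet> v\<bar> \<le> \<bar>c\<bar> * norm x'" unfolding c_def by (rule unit_bound[OF S mx x'S])
    then show ?thesis using that unfolding a_def by simp
  qed
  ultimately have "a = 0" by auto
  have "x = x' + (x \<bullet> u) *\<^sub>R u" unfolding x'_def by simp
  then have "x \<bullet> v = x' \<bullet> v + (x \<bullet> u) * (u \<bullet> v)"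
    by (metis inner_add_left inner_scaleR_left)
  then show ?thesis using \<open>a = 0\<close> unfolding a_def by simp
qed

lemma ps_swap: "principal_seq U V u v \<Longrightarrow> principal_seq V U v u"
  unfolding principal_seq_def
  by (simp add: min.commute inner_commute) (metis inner_commute)

definition Ui :: "'a::euclidean_space set \<Rightarrow> (nat \<Rightarrow> 'a) \<Rightarrow> nat \<Rightarrow> 'a set" where
  "Ui U u i = {x \<in> U. \<forall>j<i. x \<bullet> u j = 0}"

lemma subspace_Ui: "subspace U \<Longrightarrow> subspace (Ui U u i)"
  unfolding Ui_def subspace_def by (auto simp: inner_add_left)

locale PS =
  fixes U V :: "'a::euclidean_space set" and u v :: "nat \<Rightarrow> 'a"
  assumes subU: "subspace U" and subV: "subspace V" and ps: "principal_seq U V u v"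
begin

definition r where "r = min (dim U) (dim V)"

lemma spanU: "span U = U" by (rule span_eq_iff[THEN iffD2, OF subU])
lemma spanV: "span V = V" by (rule span_eq_iff[THEN iffD2, OF subV])
definition s where "s i = u i \<bullet> v i"

lemma basic:
  assumes "i < r"
  shows "u i \<in> U" "v i \<in> V" "norm (u i) = 1" "norm (v i) = 1"
    "\<And>j. j < i \<Longrightarrow> u i \<bullet> u j = 0" "\<And>j. j < i \<Longrightarrow> v i \<bullet> v j = 0"
    "\<And>x y. x \<in> U \<Longrightarrow> y \<in> V \<Longrightarrow> norm x = 1 \<Longrightarrow> norm y = 1 \<Longrightarrow>
        (\<forall>j<i. x \<bullet> u j = 0 \<and> y \<bullet> v j = 0) \<Longrightarrow> \<bar>x \<bullet> y\<bar> \<le> \<bar>u i \<bullet> v i\<bar>"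
  using ps assms unfolding principal_seq_def r_def by blast+

lemma orthu: "i < r \<Longrightarrow> j < r \<Longrightarrow> u i \<bullet> u j = (if i = j then 1 else 0)"
proof -
  assume a: "i < r" "j < r"
  consider "i = j" | "j < i" | "i < j" by linarith
  then show ?thesis
  proof cases
    case 1 then show ?thesis using basic(3)[OF a(1)] by (simp add: norm_eq_1)
  next
    case 2 then show ?thesis using basic(5)[OF a(1)] by simp
  next
    case 3 then show ?thesis using basic(5)[OF a(2), of i] by (simp add: inner_commute)
  qed
qed

lemma stat1:
  assumes i: "i < r" and x: "x \<in> U" and xo: "\<And>j. j < i \<Longrightarrow> x \<bullet> u j = 0"
  shows "x \<bullet> v i = s i * (x \<bullet> u i)"
  unfolding s_def
proof (rule stat_gen[OF subspace_Ui[OF subU, of u i]])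
  show "u i \<in> Ui U u i" unfolding Ui_def using basic[OF i] by auto
  show "norm (u i) = 1" using basic[OF i] by auto
  show "x \<in> Ui U u i" unfolding Ui_def using x xo by auto
  fix z assume "z \<in> Ui U u i" "norm z = 1"
  then show "\<bar>z \<bullet> v i\<bar> \<le> \<bar>u i \<bullet> v i\<bar>"
    using basic(7)[OF i, of z "v i"] basic(2,4,6)[OF i] unfolding Ui_def by auto
qed

end

lemma PS_swap: "PS U V u v \<Longrightarrow> PS V U v u"
  unfolding PS_def using ps_swap by blast

context PS begin

lemma r_swap: "PS.r V U = r"
  using PS.r_def[OF PS_swap[OF PS_axioms]] r_def by (simp add: min.commute)

lemma s_swap: "PS.s v u i = s i"
  using PS.s_def[OF PS_swap[OF PS_axioms]] s_def by (simp add: inner_commute)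

lemma stat2:
  assumes i: "i < r" and y: "y \<in> V" and yo: "\<And>j. j < i \<Longrightarrow> y \<bullet> v j = 0"
  shows "y \<bullet> u i = s i * (y \<bullet> v i)"
  using PS.stat1[OF PS_swap[OF PS_axioms], of i y] i y yo r_swap s_swap by simp

lemma cross: "i < r \<Longrightarrow> j < r \<Longrightarrow> i \<noteq> j \<Longrightarrow> u i \<bullet> v j = 0"
proof -
  assume a: "i < r" "j < r" "i \<noteq> j"
  then consider "j < i" | "i < j" by linarith
  then show ?thesis
  proof cases
    case 1
    have "u i \<bullet> v j = s j * (u i \<bullet> u j)"
      by (rule stat1[OF a(2) basic(1)[OF a(1)]]) (use basic(5)[OF a(1)] 1 in auto)
    then show ?thesis using basic(5)[OF a(1) 1] by simp
  next
    case 2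
    have "v j \<bullet> u i = s i * (v j \<bullet> v i)"
      by (rule stat2[OF a(1) basic(2)[OF a(2)]]) (use basic(6)[OF a(2)] 2 in auto)
    then show ?thesis using basic(6)[OF a(2) 2] by (simp add: inner_commute)
  qed
qed

lemma onsum_inner:
  assumes l: "l < i" and i: "i \<le> r"
  shows "(\<Sum>j<i. c j *\<^sub>R u j) \<bullet> u l = c l"
proof -
  have "(\<Sum>j<i. c j *\<^sub>R u j) \<bullet> u l = (\<Sum>j<i. c j * (u j \<bullet> u l))" by (simp add: inner_sum_left)
  also have "\<dots> = (\<Sum>j<i. if j = l then c j else 0)"
    by (rule sum.cong) (use l i orthu in auto)
  also have "\<dots> = c l" using l by simp
  finally show ?thesis .
qed

lemma R1v: assumes i: "i < r" shows "proj U (v i) = s i *\<^sub>R u i"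
proof (rule proj_unique)
  show "s i *\<^sub>R u i \<in> span U" using basic(1)[OF i] subU by (simp add: span_scale span_base)
  fix w assume "w \<in> span U"
  then have w: "w \<in> U" using spanU by simp
  define w' where "w' = w - (\<Sum>j<i. (w \<bullet> u j) *\<^sub>R u j)"
  have sumU: "(\<Sum>j<i. (w \<bullet> u j) *\<^sub>R u j) \<in> U"
    using basic(1) i subU by (intro subspace_sum subspace_scale) auto
  have w'U: "w' \<in> U" unfolding w'_def using w sumU subU by (simp add: subspace_diff)
  have w'o: "w' \<bullet> u l = 0" if "l < i" for l
    unfolding w'_def using onsum_inner[OF that, of "\<lambda>j. w \<bullet> u j"] i by (simp add: inner_diff_left)
  have st: "w' \<bullet> v i = s i * (w' \<bullet> u i)" by (rule stat1[OF i w'U w'o])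
  have sv: "(\<Sum>j<i. (w \<bullet> u j) *\<^sub>R u j) \<bullet> v i = 0"
    using cross i by (simp add: inner_sum_left)
  have su: "(\<Sum>j<i. (w \<bullet> u j) *\<^sub>R u j) \<bullet> u i = 0"
    using orthu i by (simp add: inner_sum_left)
  have "w = w' + (\<Sum>j<i. (w \<bullet> u j) *\<^sub>R u j)" unfolding w'_def by simp
  then have "(v i - s i *\<^sub>R u i) \<bullet> w = (v i - s i *\<^sub>R u i) \<bullet> w' + (v i - s i *\<^sub>R u i) \<bullet> (\<Sum>j<i. (w \<bullet> u j) *\<^sub>R u j)"
    by (metis inner_add_right)
  also have "(v i - s i *\<^sub>R u i) \<bullet> w' = w' \<bullet> v i - s i * (w' \<bullet> u i)"
    unfolding inner_diff_left inner_scaleR_left inner_commute[of "v i" w'] inner_commute[of "u i" w'] ..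
  also have "(v i - s i *\<^sub>R u i) \<bullet> (\<Sum>j<i. (w \<bullet> u j) *\<^sub>R u j)
      = (\<Sum>j<i. (w \<bullet> u j) *\<^sub>R u j) \<bullet> v i - s i * ((\<Sum>j<i. (w \<bullet> u j) *\<^sub>R u j) \<bullet> u i)"
    by (simp only: inner_diff_left inner_scaleR_left inner_commute)
  finally show "(v i - s i *\<^sub>R u i) \<bullet> w = 0" using st sv su by simp
qed

lemma R2u: assumes i: "i < r" shows "proj V (u i) = s i *\<^sub>R v i"
  using PS.R1v[OF PS_swap[OF PS_axioms], of i] i r_swap s_swap by simp

lemma s_abs_le: "i < r \<Longrightarrow> \<bar>s i\<bar> \<le> 1"
  unfolding s_def using Cauchy_Schwarz_ineq2[of "u i" "v i"] basic(3,4) by simp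

lemma span_u: assumes "r = dim U" shows "U \<subseteq> span (u ` {..<r})"
proof (rule card_ge_dim_independent)
  show "u ` {..<r} \<subseteq> U" using basic(1) by auto
  have "0 \<notin> u ` {..<r}" using basic(3) by (metis imageE lessThan_iff norm_zero zero_neq_one)
  moreover have "pairwise orthogonal (u ` {..<r})"
    unfolding pairwise_def orthogonal_def using orthu by auto
  ultimately show "independent (u ` {..<r})" using pairwise_orthogonal_independent by blast
  have "inj_on u {..<r}"
    unfolding inj_on_def using orthu by (metis lessThan_iff zero_neq_one)
  then show "dim U \<le> card (u ` {..<r})" using assms by (simp add: card_image)
qed

lemma eig_principal:
  assumes aU: "a \<in> U" and a0: "a \<noteq> 0" and ev: "proj U (proj V a) = lam *\<^sub>R a" and l0: "lam \<noteq> 0"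
  shows "\<exists>j<r. (s j)\<^sup>2 = lam"
proof (rule ccontr)
  assume "\<not> ?thesis"
  then have ne: "\<And>j. j < r \<Longrightarrow> (s j)\<^sup>2 \<noteq> lam" by auto
  have R1in: "proj U z \<bullet> w = z \<bullet> w" if "w \<in> U" for z w
    using proj_in_inner[of w U z] that by (simp add: span_base)
  have R2in: "proj V z \<bullet> w = z \<bullet> w" if "w \<in> V" for z w
    using proj_in_inner[of w V z] that by (simp add: span_base)
  have au: "a \<bullet> u j = 0" if j: "j < r" for j
  proof -
    have "lam * (a \<bullet> u j) = proj U (proj V a) \<bullet> u j" using ev by simp
    also have "\<dots> = proj V a \<bullet> u j" using R1in basic(1)[OF j] by blast
    also have "\<dots> = a \<bullet> proj V (u j)" by (rule proj_sym)
    also have "\<dots> = s j * (a \<bullet> v j)" using R2u[OF j] by simp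
    also have "a \<bullet> v j = proj U (v j) \<bullet> a"
      using R1in[OF aU, of "v j"] by (simp add: inner_commute)
    also have "\<dots> = s j * (a \<bullet> u j)" using R1v[OF j] by (simp add: inner_commute)
    finally have "(lam - (s j)\<^sup>2) * (a \<bullet> u j) = 0" by (simp add: power2_eq_square algebra_simps)
    then show ?thesis using ne[OF j] by simp
  qed
  define b where "b = proj V a"
  have bV: "b \<in> V" unfolding b_def using proj_in[of V a] spanV by simp
  have bv: "b \<bullet> v j = 0" if j: "j < r" for j
  proof -
    have "b \<bullet> v j = a \<bullet> v j" unfolding b_def using R2in basic(2)[OF j] by blast
    also have "\<dots> = proj U (v j) \<bullet> a" using R1in[OF aU, of "v j"] by (simp add: inner_commute)
    also have "\<dots> = 0" using R1v[OF j] au[OF j] by (simp add: inner_commute)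
    finally show ?thesis .
  qed
  have b0: "b \<noteq> 0" using ev a0 l0 unfolding b_def by (auto simp: proj_zero)
  have "r = dim U \<or> r = dim V" unfolding r_def by linarith
  then show False
  proof
    assume "r = dim U"
    then have "a \<in> span (u ` {..<r})" using span_u aU by blast
    then have "orthogonal a a" by (rule orthogonal_to_span) (use au in \<open>auto simp: orthogonal_def\<close>)
    then show False using a0 by (simp add: orthogonal_def)
  next
    assume "r = dim V"
    then have "b \<in> span (v ` {..<r})" using PS.span_u[OF PS_swap[OF PS_axioms]] r_swap bV by auto
    then have "orthogonal b b" by (rule orthogonal_to_span) (use bv in \<open>auto simp: orthogonal_def\<close>)
    then show False using b0 by (simp add: orthogonal_def)
  qed
qed

end


definition Pp :: "'a::euclidean_space set \<Rightarrow> 'a \<Rightarrow> 'a" where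
  "Pp S x = x - proj S x"

lemma Pp_proj: "proj S (Pp S x) = 0"
  unfolding Pp_def by (simp add: proj_diff proj_proj)

lemma proj_eq_Pp: "proj S z = z - Pp S z"
  unfolding Pp_def by simp

lemma Pp_idem: "Pp S (Pp S x) = Pp S x"
  unfolding Pp_def by (simp add: proj_diff proj_proj)

lemma Pp_sym: "Pp S x \<bullet> y = x \<bullet> Pp S y"
  unfolding Pp_def by (simp add: inner_diff_left inner_diff_right proj_sym)

lemma linear_Pp: "linear (Pp S)"
  unfolding Pp_def by (intro linear_compose_sub linear_ident linear_proj)

lemma Pp_add: "Pp S (x + y) = Pp S x + Pp S y" and Pp_scale: "Pp S (c *\<^sub>R x) = c *\<^sub>R Pp S x"
  and Pp_diff: "Pp S (x - y) = Pp S x - Pp S y" and Pp_0: "Pp S 0 = 0"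
  unfolding Pp_def by (simp_all add: proj_add proj_scale proj_diff algebra_simps proj_zero span_zero)

lemma Pp_norm2: "(norm x)\<^sup>2 = (norm (proj S x))\<^sup>2 + (norm (Pp S x))\<^sup>2"
  unfolding Pp_def by (rule proj_norm2)

lemma Pp_norm_le: "norm (Pp S x) \<le> norm x"
proof -
  have "(norm (Pp S x))\<^sup>2 \<le> (norm x)\<^sup>2" using Pp_norm2[of x S] by simp
  then show ?thesis using norm_ge_zero power2_le_imp_le by blast
qed

lemma Pp_inner_self: "x \<bullet> Pp S x = (norm (Pp S x))\<^sup>2"
proof -
  have "x \<bullet> Pp S x = x \<bullet> Pp S (Pp S x)" by (simp add: Pp_idem)
  also have "\<dots> = Pp S x \<bullet> Pp S x" by (simp add: Pp_sym)
  finally show ?thesis by (simp add: dot_square_norm)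
qed

lemma alg1:
  fixes a c :: real
  shows "(a ^ m * c) * (a ^ Suc m * c) - (a ^ Suc m * c) * (a ^ Suc m * c) = c\<^sup>2 * (a ^ (2 * m + 1) * (1 - a))"
proof -
  have p: "a ^ (2 * m + 1) = a ^ m * a ^ m * a" by (simp add: mult_2 power_add)
  show ?thesis unfolding p by (simp add: power2_eq_square algebra_simps)
qed

context PS begin

definition M where "M x = Pp U (Pp V (Pp U x))"

lemma selfadj_M: "selfadj M"
  unfolding selfadj_def M_def
proof
  show "linear (\<lambda>x. Pp U (Pp V (Pp U x)))"
    by (rule linearI) (simp_all only: Pp_add Pp_scale)
  show "\<forall>x y. Pp U (Pp V (Pp U x)) \<bullet> y = x \<bullet> Pp U (Pp V (Pp U y))"
  proof (intro allI)
    fix x y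
    have "Pp U (Pp V (Pp U x)) \<bullet> y = Pp V (Pp U x) \<bullet> Pp U y" by (rule Pp_sym)
    also have "\<dots> = Pp U x \<bullet> Pp V (Pp U y)" by (rule Pp_sym)
    also have "\<dots> = x \<bullet> Pp U (Pp V (Pp U y))" by (rule Pp_sym)
    finally show "Pp U (Pp V (Pp U x)) \<bullet> y = x \<bullet> Pp U (Pp V (Pp U y))" .
  qed
qed

lemma M_eig:
  assumes e0: "e \<noteq> 0" and ev: "M e = mu *\<^sub>R e" and m0: "0 < mu" and m1: "mu < 1"
  shows "\<exists>j<r. (s j)\<^sup>2 = mu"
proof -
  have "Pp U (M e) = M e" unfolding M_def by (simp add: Pp_idem)
  then have "mu *\<^sub>R Pp U e = mu *\<^sub>R e" using ev by (simp add: Pp_scale)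
  then have Pe: "Pp U e = e" using m0 by simp
  have pUe: "proj U e = 0" using Pp_proj[of U e] Pe by simp
  have PUV: "Pp U (Pp V e) = mu *\<^sub>R e" using ev Pe unfolding M_def by simp
  define a where "a = proj U (Pp V e)"
  have a_eq: "a = Pp V e - mu *\<^sub>R e" unfolding a_def proj_eq_Pp[of U] PUV ..
  have aU: "a \<in> U" unfolding a_def using proj_in spanU by metis
  have a0: "a \<noteq> 0"
  proof
    assume "a = 0"
    then have pv: "Pp V e = mu *\<^sub>R e" using a_eq by simp
    have "e \<bullet> Pp V e = (norm (Pp V e))\<^sup>2" by (rule Pp_inner_self)
    then have "mu * (e \<bullet> e) = mu\<^sup>2 * (e \<bullet> e)" unfolding pv
      by (simp add: power_mult_distrib dot_square_norm power2_eq_square)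
    moreover have "e \<bullet> e \<noteq> 0" using e0 by simp
    ultimately have "mu = mu\<^sup>2" by simp
    then show False using m0 m1 by (simp add: power2_eq_square)
  qed
  have "proj U (proj V a) = mu *\<^sub>R a"
  proof -
    have "proj V a = - mu *\<^sub>R proj V e" unfolding a_eq
      by (simp add: proj_diff proj_scale Pp_proj)
    then have "proj U (proj V a) = - mu *\<^sub>R proj U (proj V e)" by (simp add: proj_scale proj_neg)
    also have "proj V e = e - Pp V e" unfolding Pp_def by simp
    also have "proj U (e - Pp V e) = - a" unfolding a_def by (simp add: proj_diff pUe)
    finally show ?thesis by simp
  qed
  from eig_principal[OF aU a0 this] m0 show ?thesis by simp
qed

lemma M_pow_coord:
  assumes ev: "M e = mu *\<^sub>R e"
  shows "(M ^^ m) x \<bullet> e = mu ^ m * (x \<bullet> e)"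
proof (induction m)
  case 0 then show ?case by simp
next
  case (Suc m)
  have "(M ^^ Suc m) x \<bullet> e = (M ^^ m) x \<bullet> M e"
    using selfadj_M unfolding selfadj_def by simp
  also have "\<dots> = mu * ((M ^^ m) x \<bullet> e)" using ev by simp
  finally show ?case using Suc.IH by simp
qed

lemma G_pow:
  "((\<lambda>x. Pp V (Pp U x)) ^^ Suc m) x = Pp V ((M ^^ m) (Pp U x))"
proof (induction m)
  case 0 then show ?case by simp
next
  case (Suc m)
  have inv: "Pp U ((M ^^ m) (Pp U x)) = (M ^^ m) (Pp U x)"
    by (cases m) (simp_all add: M_def Pp_idem)
  have "((\<lambda>x. Pp V (Pp U x)) ^^ Suc (Suc m)) x = Pp V (Pp U (Pp V ((M ^^ m) (Pp U x))))"
    using Suc.IH by simp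
  also have "\<dots> = Pp V (M ((M ^^ m) (Pp U x)))" unfolding M_def inv by simp
  finally show ?case by simp
qed

lemma key_identity:
  assumes y: "Pp U y = y"
  shows "(norm (proj U (Pp V y)))\<^sup>2 = y \<bullet> M y - (norm (M y))\<^sup>2"
proof -
  have "(norm (Pp V y))\<^sup>2 = (norm (proj U (Pp V y)))\<^sup>2 + (norm (Pp U (Pp V y)))\<^sup>2"
    by (rule Pp_norm2)
  moreover have "(norm (Pp V y))\<^sup>2 = y \<bullet> M y"
  proof -
    have "y \<bullet> M y = y \<bullet> Pp U (Pp V y)" unfolding M_def y ..
    also have "\<dots> = Pp U y \<bullet> Pp V y" by (simp add: Pp_sym)
    also have "\<dots> = y \<bullet> Pp V y" using y by simp
    finally show ?thesis by (simp add: Pp_inner_self)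
  qed
  moreover have "Pp U (Pp V y) = M y" unfolding M_def y ..
  ultimately show ?thesis by simp
qed

lemma M_eigval_range:
  assumes n1: "norm e = 1" and ev: "M e = mu *\<^sub>R e"
  shows "0 \<le> mu" "mu \<le> 1"
proof -
  have "mu = M e \<bullet> e" using ev n1 by (simp add: dot_square_norm)
  also have "\<dots> = Pp V (Pp U e) \<bullet> Pp U e" unfolding M_def by (simp add: Pp_sym Pp_idem)
  also have "\<dots> = (norm (Pp V (Pp U e)))\<^sup>2"
    by (simp add: inner_commute Pp_inner_self)
  finally have mu: "mu = (norm (Pp V (Pp U e)))\<^sup>2" .
  show "0 \<le> mu" unfolding mu by simp
  have "norm (Pp V (Pp U e)) \<le> 1" using Pp_norm_le[of V "Pp U e"] Pp_norm_le[of U e] n1 by simp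
  then show "mu \<le> 1" unfolding mu using power_le_one[OF norm_ge_zero] by blast
qed

lemma main_bound:
  assumes n: "n \<ge> 1" and Bnd0: "0 \<le> Bnd"
    and Bnd: "\<And>j. j < r \<Longrightarrow> \<bar>s j\<bar> < 1 \<Longrightarrow> ((s j)\<^sup>2) ^ (2 * n - 1) * (1 - (s j)\<^sup>2) \<le> Bnd"
  shows "(norm (proj U (((\<lambda>x. Pp V (Pp U x)) ^^ n) w)))\<^sup>2 \<le> Bnd * (norm w)\<^sup>2"
proof -
  obtain m where nm: "n = Suc m" using n by (cases n) auto
  obtain E where fin: "finite E" and n1: "\<And>e. e \<in> E \<Longrightarrow> norm e = 1"
    and eig: "\<And>e. e \<in> E \<Longrightarrow> M e = (M e \<bullet> e) *\<^sub>R e" and po: "pairwise orthogonal E"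
    and sp: "span E = UNIV"
    using spectral[OF selfadj_M] by blast
  define mu where "mu e = M e \<bullet> e" for e
  have eig': "\<And>e. e \<in> E \<Longrightarrow> M e = mu e *\<^sub>R e" unfolding mu_def by (rule eig)
  define x where "x = Pp U w"
  define y where "y = (M ^^ m) x"
  have yP: "Pp U y = y" unfolding y_def x_def by (cases m) (simp_all add: M_def Pp_idem)
  have "(norm (proj U (((\<lambda>x. Pp V (Pp U x)) ^^ n) w)))\<^sup>2 = y \<bullet> M y - (norm (M y))\<^sup>2"
    unfolding nm G_pow y_def[symmetric] x_def[symmetric] using key_identity[OF yP] by simp
  also have "\<dots> = (\<Sum>e\<in>E. (x \<bullet> e)\<^sup>2 * ((mu e) ^ (2 * m + 1) * (1 - mu e)))"
  proof -
    have ye: "y \<bullet> e = mu e ^ m * (x \<bullet> e)" if "e \<in> E" for e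
      unfolding y_def by (rule M_pow_coord[OF eig'[OF that]])
    have mye: "M y \<bullet> e = mu e ^ Suc m * (x \<bullet> e)" if "e \<in> E" for e
      using M_pow_coord[OF eig'[OF that], of "Suc m" x] unfolding y_def by simp
    have "y \<bullet> M y = (\<Sum>e\<in>E. (y \<bullet> e) * (M y \<bullet> e))" by (rule onb_inner[OF fin n1 po sp])
    moreover have "(norm (M y))\<^sup>2 = (\<Sum>e\<in>E. (M y \<bullet> e) * (M y \<bullet> e))"
      using onb_inner[OF fin n1 po sp, of "M y" "M y"] by (simp add: dot_square_norm)
    ultimately have "y \<bullet> M y - (norm (M y))\<^sup>2 = (\<Sum>e\<in>E. (y \<bullet> e) * (M y \<bullet> e) - (M y \<bullet> e) * (M y \<bullet> e))"
      by (simp add: sum_subtractf)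
    also have "\<dots> = (\<Sum>e\<in>E. (x \<bullet> e)\<^sup>2 * ((mu e) ^ (2 * m + 1) * (1 - mu e)))"
    proof (rule sum.cong)
      fix e assume e: "e \<in> E"
      show "(y \<bullet> e) * (M y \<bullet> e) - (M y \<bullet> e) * (M y \<bullet> e) = (x \<bullet> e)\<^sup>2 * ((mu e) ^ (2 * m + 1) * (1 - mu e))"
        unfolding ye[OF e] mye[OF e] by (rule alg1[where a="mu e" and c="x \<bullet> e" and m=m])
    qed simp
    finally show ?thesis .
  qed
  also have "\<dots> \<le> (\<Sum>e\<in>E. (x \<bullet> e)\<^sup>2 * Bnd)"
  proof (rule sum_mono)
    fix e assume e: "e \<in> E"
    have r0: "0 \<le> mu e" and r1: "mu e \<le> 1" using M_eigval_range[OF n1[OF e] eig'[OF e]] by auto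
    have "(mu e) ^ (2 * m + 1) * (1 - mu e) \<le> Bnd"
    proof (cases "mu e = 0 \<or> mu e = 1")
      case True
      then have z: "(mu e) ^ (2 * m + 1) * (1 - mu e) = 0" by (elim disjE) simp_all
      show ?thesis using Bnd0 z by linarith
    next
      case False
      then have mm: "0 < mu e" "mu e < 1" using r0 r1 by linarith+
      have e0: "e \<noteq> 0" using n1[OF e] by (metis norm_zero zero_neq_one)
      obtain j where j: "j < r" "(s j)\<^sup>2 = mu e" using M_eig[OF e0 eig'[OF e] mm] by blast
      have "(s j)\<^sup>2 < 1" using j(2) mm(2) by simp
      then have sj: "\<bar>s j\<bar> < 1" by (simp only: abs_square_less_1)
      have nn: "2 * n - 1 = 2 * m + 1" using nm by simp
      have "((s j)\<^sup>2) ^ (2 * n - 1) * (1 - (s j)\<^sup>2) \<le> Bnd" by (rule Bnd[OF j(1) sj])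
      then show ?thesis unfolding nn j(2) .
    qed
    then show "(x \<bullet> e)\<^sup>2 * ((mu e) ^ (2 * m + 1) * (1 - mu e)) \<le> (x \<bullet> e)\<^sup>2 * Bnd"
      by (rule mult_left_mono) simp
  qed
  also have "\<dots> = Bnd * (norm x)\<^sup>2"
    using onb_inner[OF fin n1 po sp, of x x]
    by (simp add: dot_square_norm sum_distrib_left power2_eq_square mult.commute)
  also have "\<dots> \<le> Bnd * (norm w)\<^sup>2"
    using Pp_norm_le[of U w] Bnd0 unfolding x_def
    by (intro mult_left_mono power_mono) auto
  finally show ?thesis .
qed

end


lemma alg2:
  fixes t c :: real
  assumes t2: "t\<^sup>2 = 1 - c\<^sup>2" and c1: "c\<^sup>2 < 1"
  shows "((1 / t) * c ^ (2 * m + 1) * (c\<^sup>2 - 1))\<^sup>2 = (c\<^sup>2) ^ (2 * Suc m - 1) * (1 - c\<^sup>2)"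
proof -
  have "((1 / t) * c ^ (2 * m + 1) * (c\<^sup>2 - 1))\<^sup>2 = (c ^ (2 * m + 1))\<^sup>2 * ((c\<^sup>2 - 1)\<^sup>2 / t\<^sup>2)"
    by (simp add: power_mult_distrib power_divide)
  also have "(c\<^sup>2 - 1)\<^sup>2 = (1 - c\<^sup>2) * (1 - c\<^sup>2)" by (simp add: power2_eq_square algebra_simps)
  also have "(1 - c\<^sup>2) * (1 - c\<^sup>2) / t\<^sup>2 = 1 - c\<^sup>2" unfolding t2 using c1 by simp
  also have "(c ^ (2 * m + 1))\<^sup>2 = (c\<^sup>2) ^ (2 * Suc m - 1)"
  proof -
    have "(c ^ (2 * m + 1))\<^sup>2 = c ^ ((2 * m + 1) * 2)" by (rule power_mult[symmetric])
    also have "\<dots> = (c\<^sup>2) ^ (2 * m + 1)" by (simp only: mult.commute[of "2 * m + 1" 2] power_mult)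
    finally have "(c ^ (2 * m + 1))\<^sup>2 = (c\<^sup>2) ^ (2 * m + 1)" .
    moreover have "2 * Suc m - 1 = 2 * m + 1" by simp
    ultimately show ?thesis by simp
  qed
  finally show ?thesis .
qed

context PS begin

lemma Gpow_scale: "((\<lambda>x. Pp V (Pp U x)) ^^ m) (c *\<^sub>R x) = c *\<^sub>R ((\<lambda>x. Pp V (Pp U x)) ^^ m) x"
  by (induction m) (simp_all add: Pp_scale)

lemma witness:
  assumes i: "i < r" and s0: "s i \<noteq> 0" and s1: "\<bar>s i\<bar> < 1" and n: "n \<ge> 1"
  defines "t \<equiv> sqrt (1 - (s i)\<^sup>2)"
  defines "g \<equiv> (1 / t) *\<^sub>R (v i - s i *\<^sub>R u i)"
  shows "norm g = 1" "g \<in> span (U \<union> V)"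
    "(norm (proj U (((\<lambda>x. Pp V (Pp U x)) ^^ n) g)))\<^sup>2 = ((s i)\<^sup>2) ^ (2 * n - 1) * (1 - (s i)\<^sup>2)"
proof -
  define a where "a = u i"
  define b where "b = v i"
  define c where "c = s i"
  have aU: "a \<in> U" and bV: "b \<in> V" using basic[OF i] unfolding a_def b_def by auto
  have aa: "a \<bullet> a = 1" and bb: "b \<bullet> b = 1" using basic(3,4)[OF i] unfolding a_def b_def
    by (simp_all add: norm_eq_1)
  have ab: "a \<bullet> b = c" unfolding a_def b_def c_def s_def ..
  have pUa: "proj U a = a" by (rule proj_id) (simp add: spanU aU)
  have pVb: "proj V b = b" by (rule proj_id) (simp add: spanV bV)
  have pUb: "proj U b = c *\<^sub>R a" unfolding a_def b_def c_def by (rule R1v[OF i])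
  have pVa: "proj V a = c *\<^sub>R b" unfolding a_def b_def c_def by (rule R2u[OF i])
  have c1: "c\<^sup>2 < 1" using s1 unfolding c_def by (simp add: abs_square_less_1)
  have tpos: "t > 0" unfolding t_def using c1 unfolding c_def by simp
  have t2: "t\<^sup>2 = 1 - c\<^sup>2" unfolding t_def c_def using c1 unfolding c_def by simp
  define g' where "g' = b - c *\<^sub>R a"
  define h' where "h' = c *\<^sub>R b - a"
  have g_eq: "g = (1 / t) *\<^sub>R g'" unfolding g_def g'_def a_def b_def c_def ..
  let ?G = "\<lambda>x. Pp V (Pp U x)"
  have PUg: "Pp U g' = g'" unfolding Pp_def g'_def by (simp add: proj_diff proj_scale pUa pUb)
  have PVg: "Pp V g' = c *\<^sub>R h'" unfolding Pp_def g'_def h'_def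
    by (simp add: proj_diff proj_scale pVa pVb algebra_simps power2_eq_square)
  have PUh: "Pp U h' = c *\<^sub>R g'" unfolding Pp_def g'_def h'_def
    by (simp add: proj_diff proj_scale pUa pUb algebra_simps)
  have Gg: "?G g' = c *\<^sub>R h'" by (simp add: PUg PVg)
  have Gh: "?G h' = c\<^sup>2 *\<^sub>R h'" by (simp add: PUh Pp_scale PVg power2_eq_square)
  have Gpow: "(?G ^^ Suc m) g' = (c ^ (2 * m + 1)) *\<^sub>R h'" for m
  proof (induction m)
    case 0 then show ?case by (simp add: Gg)
  next
    case (Suc m)
    have "(?G ^^ Suc (Suc m)) g' = ?G ((c ^ (2 * m + 1)) *\<^sub>R h')" using Suc.IH by simp
    also have "\<dots> = (c ^ (2 * m + 1) * c\<^sup>2) *\<^sub>R h'" by (simp add: Pp_scale Gh)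
    also have "c ^ (2 * m + 1) * c\<^sup>2 = c ^ (2 * Suc m + 1)" by (simp add: power2_eq_square)
    finally show ?case .
  qed
  have pUh: "proj U h' = (c\<^sup>2 - 1) *\<^sub>R a" unfolding h'_def
    by (simp add: proj_diff proj_scale pUa pUb power2_eq_square algebra_simps)
  obtain m where nm: "n = Suc m" using n by (cases n) auto
  define K where "K = (1 / t) * c ^ (2 * m + 1) * (c\<^sup>2 - 1)"
  have "proj U ((?G ^^ n) g) = K *\<^sub>R a"
    unfolding g_eq nm Gpow_scale Gpow K_def by (simp add: proj_scale pUh)
  then have "(norm (proj U ((?G ^^ n) g)))\<^sup>2 = K\<^sup>2"
    using basic(3)[OF i] unfolding a_def by simp
  also have "K\<^sup>2 = (c\<^sup>2) ^ (2 * n - 1) * (1 - c\<^sup>2)"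
    unfolding K_def nm by (rule alg2[OF t2 c1])
  finally show "(norm (proj U ((?G ^^ n) g)))\<^sup>2 = ((s i)\<^sup>2) ^ (2 * n - 1) * (1 - (s i)\<^sup>2)"
    unfolding c_def .
  have "g' \<bullet> g' = b \<bullet> b - 2 * c * (a \<bullet> b) + c\<^sup>2 * (a \<bullet> a)" unfolding g'_def
    by (simp add: inner_diff_left inner_diff_right inner_commute[of b a] power2_eq_square algebra_simps)
  also have "\<dots> = 1 - c\<^sup>2" using aa bb ab by (simp add: power2_eq_square)
  finally have "(norm g')\<^sup>2 = t\<^sup>2" using t2 by (simp add: dot_square_norm)
  then have "norm g' = t" using tpos by (simp add: power2_eq_iff_nonneg)
  then show "norm g = 1" unfolding g_eq using tpos by simp
  show "g \<in> span (U \<union> V)" unfolding g_eq g'_def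
    using aU bV by (intro span_scale span_diff span_base) auto
qed

end

lemma sing_norm:
  fixes X :: "real^'d^'n"
  assumes sv: "\<forall>\<sigma>. singular_value X \<sigma> \<and> \<sigma> \<noteq> 0 \<longrightarrow> \<sigma> = 1"
  shows "norm (X *v z) = norm (Qr X z)"
proof -
  define A where "A x = transpose X *v (X *v x)" for x
  have Asym: "A x \<bullet> y = x \<bullet> A y" for x y
    unfolding A_def by (metis mv_inner_transpose inner_commute)
  have sa: "selfadj A" unfolding selfadj_def
  proof
    show "linear A" unfolding A_def by (rule linearI) (simp_all add: matrix_vector_right_distrib matrix_vector_mult_scaleR)
    show "\<forall>x y. A x \<bullet> y = x \<bullet> A y" using Asym by blast
  qed
  obtain E where fin: "finite E" and n1: "\<And>e. e \<in> E \<Longrightarrow> norm e = 1"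
    and eig: "\<And>e. e \<in> E \<Longrightarrow> A e = (A e \<bullet> e) *\<^sub>R e" and po: "pairwise orthogonal E"
    and sp: "span E = UNIV"
    using spectral[OF sa] by blast
  have AAe: "A (A e) = A e" if e: "e \<in> E" for e
  proof -
    define mu where "mu = A e \<bullet> e"
    have Ae: "A e = mu *\<^sub>R e" unfolding mu_def by (rule eig[OF e])
    have "mu = e \<bullet> A e" unfolding mu_def by (rule inner_commute)
    also have "\<dots> = (X *v e) \<bullet> (X *v e)" unfolding A_def by (rule mv_inner_transpose[symmetric])
    finally have mu0: "mu \<ge> 0" by simp
    have "mu = 0 \<or> mu = 1"
    proof (cases "mu = 0")
      case False
      have "singular_value X (sqrt mu)" unfolding singular_value_def
      proof (intro conjI exI)
        show "sqrt mu \<ge> 0" using mu0 by simp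
        show "e \<noteq> 0" using n1[OF e] by (metis norm_zero zero_neq_one)
        show "(transpose X ** X) *v e = (sqrt mu)\<^sup>2 *s e"
          using Ae mu0 unfolding A_def by (simp add: matrix_vector_mul_assoc[symmetric] scalar_mult_eq_scaleR)
      qed
      then have "sqrt mu = 1" using sv False mu0 by auto
      then show ?thesis by simp
    qed simp
    then show ?thesis using Ae by (auto simp: linear_scale[OF sa[unfolded selfadj_def, THEN conjunct1]])
  qed
  have linA: "linear A" using sa unfolding selfadj_def by blast
  have AA: "A (A x) = A x" for x
  proof -
    define d where "d = A (A x) - A x"
    have "d \<bullet> e = 0" if e: "e \<in> E" for e
    proof -
      have "d \<bullet> e = x \<bullet> A (A e) - x \<bullet> A e" unfolding d_def by (simp add: inner_diff_left Asym)
      then show ?thesis using AAe[OF e] by simp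
    qed
    then have "orthogonal d d"
      by (intro orthogonal_to_span[of d E d]) (auto simp: sp orthogonal_def)
    then show ?thesis unfolding d_def by (simp add: orthogonal_def)
  qed
  have AQ: "A z = Qr X z"
  proof (rule proj_unique[symmetric])
    have "A z \<in> rowspace X" unfolding A_def rowspace_def by (rule rangeI)
    then show "A z \<in> span (rowspace X)" by simp
    fix w assume w: "w \<in> span (rowspace X)"
    have "(X *v (z - A z)) \<bullet> (X *v (z - A z)) = (z - A z) \<bullet> A (z - A z)"
      unfolding A_def by (rule mv_inner_transpose)
    also have "A (z - A z) = 0" using AA linear_diff[OF linA] by simp
    finally have "X *v (z - A z) = 0" by simp
    then show "(z - A z) \<bullet> w = 0" using w unfolding null_iff_orth by simp
  qed
  have "(norm (X *v z))\<^sup>2 = (X *v z) \<bullet> (X *v z)" by (simp add: dot_square_norm)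
  also have "\<dots> = z \<bullet> A z" unfolding A_def by (rule mv_inner_transpose)
  also have "\<dots> = Qr X z \<bullet> z" unfolding AQ by (rule inner_commute)
  also have "\<dots> = Qr X z \<bullet> Qr X z" by (rule proj_inner_left)
  also have "\<dots> = (norm (Qr X z))\<^sup>2" by (simp add: dot_square_norm)
  finally show ?thesis by (simp add: power2_eq_iff_nonneg)
qed


lemma G_Pp: "G X1 X2 = (\<lambda>x. Pp (rowspace X2) (Pp (rowspace X1) x))"
  by (simp add: fun_eq_iff kerproj_apply Pp_def)

lemma norm_X_le_Q:
  fixes X :: "real^'d^'n"
  assumes "spec_norm X \<le> 1"
  shows "norm (X *v q) \<le> norm (Qr X q)"
proof -
  have "norm (X *v q) = norm (X *v Qr X q)" by (simp add: mv_proj)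
  also have "\<dots> \<le> onorm (\<lambda>x. X *v x) * norm (Qr X q)"
    by (rule onorm) (rule matrix_vector_mul_bounded_linear)
  also have "\<dots> \<le> 1 * norm (Qr X q)"
    using assms unfolding spec_norm_def by (intro mult_right_mono) auto
  finally show ?thesis by simp
qed

lemma G_pow_zero: "((G X1 X2) ^^ m) 0 = 0"
  by (induction m) simp_all

theorem mainTheorem4:
  fixes X1 :: "real^'d^'n1" and y1 :: "real^'n1"
    and X2 :: "real^'d^'n2" and y2 :: "real^'n2"
    and n k :: nat and u v :: "nat \<Rightarrow> real^'d"
  assumes S: "in_S2 X1 y1 X2 y2"
    and n: "n \<ge> 1" and k: "k = 2 * n"
    and pv: "principal_seq (rowspace X1) (rowspace X2) u v"
  defines "r \<equiv> min (dim (rowspace X1)) (dim (rowspace X2))"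
  defines "B \<equiv> max0 {(cos (principal_angle u v i))\<^sup>2 ^ (k - 1) * (1 - (cos (principal_angle u v i))\<^sup>2)
                      | i. i < r \<and> principal_angle u v i > 0}"
  shows "forgetting X1 y1 X2 y2 k \<le> (1/2) * B
     \<and> ((\<forall>\<sigma>. singular_value X1 \<sigma> \<and> \<sigma> \<noteq> 0 \<longrightarrow> \<sigma> = 1) \<longrightarrow>
          forgetting X1 y1 X2 y2 k =
            (1/2) * (norm ((mat 1 - kerproj X1) *v
                ((\<lambda>x. kerproj X2 *v (kerproj X1 *v x)) ^^ n) (min_norm_sol X1 y1 X2 y2)))\<^sup>2
        \<and> Sup {forgetting X1 y1' X2 y2' k | y1' y2'. in_S2 X1 y1' X2 y2'} = (1/2) * B)"
proof -
  let ?U1 = "rowspace X1" and ?U2 = "rowspace X2"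
  have psI: "PS ?U1 ?U2 u v" unfolding PS_def using subspace_rowspace[of X1] subspace_rowspace[of X2] pv by blast
  have hr: "PS.r ?U1 ?U2 = r" unfolding r_def PS.r_def[OF psI] ..
  have hs: "\<And>j. PS.s u v j = u j \<bullet> v j" using PS.s_def[OF psI] by blast
  define f where "f j = ((u j \<bullet> v j)\<^sup>2) ^ (k - 1) * (1 - (u j \<bullet> v j)\<^sup>2)" for j
  define A where "A = {(cos (principal_angle u v i))\<^sup>2 ^ (k - 1) * (1 - (cos (principal_angle u v i))\<^sup>2)
                      | i. i < r \<and> principal_angle u v i > 0}"
  have sle: "\<bar>u j \<bullet> v j\<bar> \<le> 1" if "j < r" for j
    using PS.s_abs_le[OF psI, of j] that hr hs by simp
  have cos_pa: "(cos (principal_angle u v j))\<^sup>2 = (u j \<bullet> v j)\<^sup>2" if "j < r" for j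
    unfolding principal_angle_def using sle[OF that] by (simp add: cos_arccos_abs)
  have pa_pos: "principal_angle u v j > 0 \<longleftrightarrow> \<bar>u j \<bullet> v j\<bar> < 1" if "j < r" for j
  proof -
    have b: "\<bar>u j \<bullet> v j\<bar> \<in> {-1..1}" using sle[OF that] by simp
    have "0 \<le> arccos \<bar>u j \<bullet> v j\<bar>" using sle[OF that] by (intro arccos_lbound) auto
    then show ?thesis unfolding principal_angle_def using arccos_eq_0_iff[OF b] sle[OF that] by auto
  qed
  have A_eq: "A = {f i | i. i < r \<and> \<bar>u i \<bullet> v i\<bar> < 1}"
    unfolding A_def f_def using cos_pa pa_pos by (auto; metis)
  have finA: "finite A" unfolding A_eq
    by (rule finite_subset[of _ "f ` {..<r}"]) auto
  have f_nonneg: "0 \<le> f j" if "j < r" for j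
  proof -
    have "(u j \<bullet> v j)\<^sup>2 \<le> 1" using sle[OF that] by (simp add: abs_square_le_1)
    then show ?thesis unfolding f_def by simp
  qed
  have BA: "B = max0 A" unfolding B_def A_def ..
  have B0: "0 \<le> B"
  proof (cases "A = {}")
    case True then show ?thesis unfolding BA max0_def by simp
  next
    case False
    then obtain x where x: "x \<in> A" by blast
    then have "0 \<le> x" unfolding A_eq using f_nonneg by auto
    also have "x \<le> Max A" using finA x by simp
    finally show ?thesis unfolding BA max0_def using False by simp
  qed
  have Bge: "f j \<le> B" if "j < r" "\<bar>u j \<bullet> v j\<bar> < 1" for j
  proof -
    have fA: "f j \<in> A" unfolding A_eq using that by blast
    then have "A \<noteq> {}" by blast
    then show ?thesis unfolding BA max0_def using finA fA by simp
  qed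
  have km: "k - 1 = 2 * n - 1" using k by simp
  have gen: "forgetting X1 y1' X2 y2' k = (1/2) * (norm (X1 *v ((G X1 X2) ^^ n) (min_norm_sol X1 y1' X2 y2')))\<^sup>2
      \<and> (norm (Qr X1 (((G X1 X2) ^^ n) (min_norm_sol X1 y1' X2 y2'))))\<^sup>2 \<le> B
      \<and> forgetting X1 y1' X2 y2' k \<le> (1/2) * B" if S': "in_S2 X1 y1' X2 y2'" for y1' y2'
  proof -
    obtain w where w: "norm w \<le> 1" "y1' = X1 *v w" "y2' = X2 *v w" and sn: "spec_norm X1 \<le> 1"
      using S' unfolding in_S2_def by blast
    define ws where "ws = min_norm_sol X1 y1' X2 y2'"
    have ws: "X1 *v ws = y1'" "X2 *v ws = y2'" "norm ws \<le> norm w"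
      unfolding ws_def using min_norm_sol_props[OF w(2)[symmetric] w(3)[symmetric]] by auto
    have F: "forgetting X1 y1' X2 y2' k = (1/2) * (norm (X1 *v ((G X1 X2) ^^ n) ws))\<^sup>2"
      unfolding k by (rule forgetting_formula[OF ws(1) ws(2) n])
    have QB: "(norm (Qr X1 (((G X1 X2) ^^ n) ws)))\<^sup>2 \<le> B * (norm ws)\<^sup>2"
      unfolding G_Pp
    proof (rule PS.main_bound[OF psI n B0])
      fix j assume "j < PS.r ?U1 ?U2" "\<bar>PS.s u v j\<bar> < 1"
      then show "((PS.s u v j)\<^sup>2) ^ (2 * n - 1) * (1 - (PS.s u v j)\<^sup>2) \<le> B"
        using Bge[of j] hr hs unfolding f_def km by simp
    qed
    also have "\<dots> \<le> B * 1"
    proof (rule mult_left_mono[OF _ B0])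
      have "norm ws \<le> 1" using ws(3) w(1) by simp
      then show "(norm ws)\<^sup>2 \<le> 1" using power_le_one[OF norm_ge_zero] by blast
    qed
    finally have QB': "(norm (Qr X1 (((G X1 X2) ^^ n) ws)))\<^sup>2 \<le> B" by simp
    have "(norm (X1 *v ((G X1 X2) ^^ n) ws))\<^sup>2 \<le> (norm (Qr X1 (((G X1 X2) ^^ n) ws)))\<^sup>2"
      by (rule power_mono[OF norm_X_le_Q[OF sn] norm_ge_zero])
    then have "(norm (X1 *v ((G X1 X2) ^^ n) ws))\<^sup>2 \<le> B" using QB' by (rule order_trans)
    then have "forgetting X1 y1' X2 y2' k \<le> (1/2) * B" unfolding F by simp
    then show ?thesis using F QB' unfolding ws_def by simp
  qed
  have part1: "forgetting X1 y1 X2 y2 k \<le> (1/2) * B" using gen[OF S] by blast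
  have part2: "forgetting X1 y1' X2 y2' k =
            (1/2) * (norm ((mat 1 - kerproj X1) *v
                ((\<lambda>x. kerproj X2 *v (kerproj X1 *v x)) ^^ n) (min_norm_sol X1 y1' X2 y2')))\<^sup>2"
    if sv: "\<forall>\<sigma>. singular_value X1 \<sigma> \<and> \<sigma> \<noteq> 0 \<longrightarrow> \<sigma> = 1" and S': "in_S2 X1 y1' X2 y2'" for y1' y2'
    using gen[OF S'] sing_norm[OF sv] by (simp add: one_minus_kerproj)
  have part3: "Sup {forgetting X1 y1' X2 y2' k | y1' y2'. in_S2 X1 y1' X2 y2'} = (1/2) * B"
    if sv: "\<forall>\<sigma>. singular_value X1 \<sigma> \<and> \<sigma> \<noteq> 0 \<longrightarrow> \<sigma> = 1"
  proof (rule cSup_eq_maximum)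
    have tasks: "is_task X1 y1'" "is_task X2 y2'" for y1' :: "real^'n1" and y2' :: "real^'n2"
      using S unfolding in_S2_def is_task_def by auto
    have sns: "spec_norm X1 \<le> 1" "spec_norm X2 \<le> 1" using S unfolding in_S2_def by auto
    have inS: "in_S2 X1 (X1 *v g) X2 (X2 *v g)" if "norm g \<le> 1" for g
      unfolding in_S2_def using tasks sns that by blast
    have zero: "forgetting X1 0 X2 0 k = 0"
    proof -
      have "min_norm_sol X1 0 X2 0 = 0" by (rule min_norm_sol_eq) (simp_all add: span_zero)
      then show ?thesis using gen[OF inS[of 0, simplified]] by (simp add: G_pow_zero)
    qed
    have zmem: "0 \<in> {forgetting X1 y1' X2 y2' k | y1' y2'. in_S2 X1 y1' X2 y2'}"
      using inS[of 0] zero by force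
    show "(1/2) * B \<in> {forgetting X1 y1' X2 y2' k | y1' y2'. in_S2 X1 y1' X2 y2'}"
    proof (cases "B = 0")
      case True then show ?thesis using zmem by simp
    next
      case False
      then have "A \<noteq> {}" unfolding BA max0_def by auto
      then have "B \<in> A" unfolding BA max0_def using finA by simp
      then obtain i where i: "i < r" "\<bar>u i \<bullet> v i\<bar> < 1" "B = f i" unfolding A_eq by blast
      have si0: "u i \<bullet> v i \<noteq> 0"
      proof
        assume "u i \<bullet> v i = 0"
        then have "f i = 0" unfolding f_def using k n by simp
        then show False using False i(3) by simp
      qed
      define t where "t = sqrt (1 - (PS.s u v i)\<^sup>2)"
      define g where "g = (1 / t) *\<^sub>R (v i - PS.s u v i *\<^sub>R u i)"
      have ir: "i < PS.r ?U1 ?U2" using i hr by simp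
      have s0: "PS.s u v i \<noteq> 0" "\<bar>PS.s u v i\<bar> < 1" using si0 i(2) hs by simp_all
      note W = PS.witness[OF psI ir s0 n, folded t_def g_def]
      have gsol: "min_norm_sol X1 (X1 *v g) X2 (X2 *v g) = g"
        by (rule min_norm_sol_eq) (use W(2) in simp_all)
      have "forgetting X1 (X1 *v g) X2 (X2 *v g) k = (1/2) * (norm (Qr X1 (((G X1 X2) ^^ n) g)))\<^sup>2"
        using part2[OF sv inS[of g]] W(1) gsol by (simp add: one_minus_kerproj)
      also have "\<dots> = (1/2) * f i" unfolding G_Pp W(3) f_def km hs ..
      finally have "forgetting X1 (X1 *v g) X2 (X2 *v g) k = (1/2) * B" using i(3) by simp
      then show ?thesis using inS[of g] W(1) by force
    qed
  next
    fix x assume "x \<in> {forgetting X1 y1' X2 y2' k | y1' y2'. in_S2 X1 y1' X2 y2'}"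
    then show "x \<le> (1/2) * B" using gen by blast
  qed
  show ?thesis using part1 part2[OF _ S] part3 by blast
qed


end
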